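(* Let $\mathcal L:\mathbb F^{q\times q}\to\mathbb F^{n\times n}$ be $*$-linear with matricization $L=[L_{ij}]$ and Choi matrix $\mathbb L$, and $m=\operatorname{rank}\mathbb L$. (a) For all $A_1,\ldots,A_m\in\mathbb F^{n\times q}$ with $\operatorname{span}\{A_1,\ldots,A_m\}=\operatorname{span}\{L_{ij}:1\le i\le n,1\le j\le q\}$, $\mathcal L$ admits a minimal Hill representation $\mathcal L(V)=\sum_{k,l=1}^m\mathbb H_{kl}A_lVA_k^*$ with some Hermitian $\mathbb H\in\mathbb F^{m\times m}$. More precisely: let $\lambda^{ij}_k$ be the unique scalars with $L_{ij}=\sum_{k=1}^m\lambda^{ij}_kA_k$ and let $L_k\in\mathbb F^{n\times q}$ have $(i,j)$ entry $\overline{\lambda^{ij}_k}$; then $L_1,\ldots,L_m$ span $\operatorname{span}\{L_{ij}\}$, the construction below applied to $L_1,\ldots,L_m$ returns exactly $A_1,\ldots,A_m$, the Hill matrix $\mathbb H=\mathbb H(\mathcal L;L_1,\ldots,L_m)$ gives such a representation, and $$\begin{bmatrix}L_1\\ \vdots\\ L_m\end{bmatrix}=(\mathbb H\otimes I_n)\begin{bmatrix}A_1\\ \vdots\\ A_m\end{bmatrix}.$$ (b) Conversely, if $\mathcal L(V)=\sum_{k,l=1}^m\mathbb H_{kl}A_lVA_k^*$ is a minimal Hill representation, then $\operatorname{span}\{A_1,\ldots,A_m\}=\operatorname{span}\{L_{ij}\}$.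
   Context: $\mathbb F\in\{\mathbb R,\mathbb C\}$; $\otimes$ Kronecker, $\circ$ Hadamard, $\vec{\mathbf 1}_p$ all-ones vector, $\overline X$ conjugate. Matricization $L\in\mathbb F^{n^2\times q^2}$ with $L\operatorname{vec}(V)=\operatorname{vec}(\mathcal L(V))$ (column-stacking), blocks $L_{ij}\in\mathbb F^{n\times q}$, $1\le i\le n$, $1\le j\le q$; Choi matrix $\mathbb L=[\mathcal L(\mathcal E^{(q)}_{ij})]_{i,j=1}^q$; $*$-linear: $\mathcal L(V^* )=\mathcal L(V)^*$. Hill representation: $\mathcal L(V)=\sum_{k,l=1}^m\mathbb H_{kl}A_lVA_k^*$ for all $V$; minimal if $m$ is smallest possible. Construction: for $L_1,\ldots,L_m$ spanning $\operatorname{span}\{L_{ij}\}$, let $L_{ij}=\sum_k\alpha^{ij}_kL_k$ (unique), $L_k=\sum_{i,j}\beta^k_{ij}L_{ij}$ (any choice); $A_k$ has $(i,j)$ entry $\overline{\alpha^{ij}_k}$, $B_k$ has $(i,j)$ entry $\beta^k_{ij}$, $\mathbb H(\mathcal L;L_1,\ldots,L_m)=[\vec{\mathbf 1}_n^*(B_k\circ\overline{L_l})\vec{\mathbf 1}_q]_{k,l=1}^m$. *)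

theory Defs
  imports "Jordan_Normal_Form.Matrix" "Jordan_Normal_Form.DL_Rank"
begin

text \<open>All indices are 0-based. Scalars range over a field with an involutive
  automorphism (conjugate); real and complex are instances.\<close>

definition madj :: "'a::conjugatable_field mat \<Rightarrow> 'a mat" where
  "madj A = mat (dim_col A) (dim_row A) (\<lambda>(i,j). conjugate (A $$ (j,i)))"

definition mconj :: "'a::conjugatable_field mat \<Rightarrow> 'a mat" where
  "mconj A = mat (dim_row A) (dim_col A) (\<lambda>(i,j). conjugate (A $$ (i,j)))"

definition hermitian_m :: "'a::conjugatable_field mat \<Rightarrow> bool" where
  "hermitian_m H = (madj H = H)"

definition munit :: "nat \<Rightarrow> nat \<Rightarrow> nat \<Rightarrow> 'a::field mat" where
  "munit q i j = mat q q (\<lambda>(a,b). if a = i \<and> b = j then 1 else 0)"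

definition linear_map_on :: "nat \<Rightarrow> nat \<Rightarrow> ('a::field mat \<Rightarrow> 'a mat) \<Rightarrow> bool" where
  "linear_map_on n q L =
     ((\<forall>V \<in> carrier_mat q q. L V \<in> carrier_mat n n) \<and>
      (\<forall>X \<in> carrier_mat q q. \<forall>Y \<in> carrier_mat q q. \<forall>a b.
          L (a \<cdot>\<^sub>m X + b \<cdot>\<^sub>m Y) = a \<cdot>\<^sub>m L X + b \<cdot>\<^sub>m L Y))"

definition star_linear :: "nat \<Rightarrow> ('a::conjugatable_field mat \<Rightarrow> 'a mat) \<Rightarrow> bool" where
  "star_linear q L = (\<forall>V \<in> carrier_mat q q. L (madj V) = madj (L V))"

text \<open>Matricization L (n^2 x q^2) with L vec(V) = vec(L(V)), column stacking:
  vec(V) at index c is V(c mod q, c div q).\<close>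
definition matricization :: "('a::field mat \<Rightarrow> 'a mat) \<Rightarrow> nat \<Rightarrow> nat \<Rightarrow> 'a mat" where
  "matricization L n q = mat (n*n) (q*q)
     (\<lambda>(r,c). L (munit q (c mod q) (c div q)) $$ (r mod n, r div n))"

definition mblock :: "('a::field mat \<Rightarrow> 'a mat) \<Rightarrow> nat \<Rightarrow> nat \<Rightarrow> nat \<Rightarrow> nat \<Rightarrow> 'a mat" where
  "mblock L n q i j = mat n q (\<lambda>(a,b). matricization L n q $$ (i*n + a, j*q + b))"

definition mblocks :: "('a::field mat \<Rightarrow> 'a mat) \<Rightarrow> nat \<Rightarrow> nat \<Rightarrow> 'a mat set" where
  "mblocks L n q = {mblock L n q i j | i j. i < n \<and> j < q}"

definition choi :: "('a::field mat \<Rightarrow> 'a mat) \<Rightarrow> nat \<Rightarrow> nat \<Rightarrow> 'a mat" where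
  "choi L n q = mat (q*n) (q*n)
     (\<lambda>(r,c). L (munit q (r div n) (c div n)) $$ (r mod n, c mod n))"

definition msum :: "nat \<Rightarrow> nat \<Rightarrow> 'b set \<Rightarrow> ('b \<Rightarrow> 'a::field mat) \<Rightarrow> 'a mat" where
  "msum n q I f = mat n q (\<lambda>(a,b). \<Sum>k\<in>I. f k $$ (a,b))"

definition mspan :: "nat \<Rightarrow> nat \<Rightarrow> 'a::field mat set \<Rightarrow> 'a mat set" where
  "mspan n q S = {M. \<exists>F c. finite F \<and> F \<subseteq> S \<and> M = msum n q F (\<lambda>X. c X \<cdot>\<^sub>m X)}"

definition hill_rep :: "('a::conjugatable_field mat \<Rightarrow> 'a mat) \<Rightarrow> nat \<Rightarrow> nat \<Rightarrow> nat
    \<Rightarrow> (nat \<Rightarrow> 'a mat) \<Rightarrow> 'a mat \<Rightarrow> bool" where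
  "hill_rep L n q m A H =
     ((\<forall>k<m. A k \<in> carrier_mat n q) \<and> H \<in> carrier_mat m m \<and>
      (\<forall>V \<in> carrier_mat q q.
         L V = msum n n ({..<m} \<times> {..<m}) (\<lambda>(k,l). H $$ (k,l) \<cdot>\<^sub>m (A l * V * madj (A k)))))"

definition minimal_hill_rep :: "('a::conjugatable_field mat \<Rightarrow> 'a mat) \<Rightarrow> nat \<Rightarrow> nat \<Rightarrow> nat
    \<Rightarrow> (nat \<Rightarrow> 'a mat) \<Rightarrow> 'a mat \<Rightarrow> bool" where
  "minimal_hill_rep L n q m A H =
     (hill_rep L n q m A H \<and>
      (\<forall>m' (A' :: nat \<Rightarrow> 'a mat) H'. hill_rep L n q m' A' H' \<longrightarrow> m \<le> m'))"

definition ones_vec :: "nat \<Rightarrow> 'a::field vec" where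
  "ones_vec p = vec p (\<lambda>_. 1)"

definition hadamard :: "'a::field mat \<Rightarrow> 'a mat \<Rightarrow> 'a mat" where
  "hadamard A B = mat (dim_row A) (dim_col A) (\<lambda>ij. A $$ ij * B $$ ij)"

definition hill_matrix :: "nat \<Rightarrow> nat \<Rightarrow> nat \<Rightarrow> (nat \<Rightarrow> 'a::conjugatable_field mat)
    \<Rightarrow> (nat \<Rightarrow> 'a mat) \<Rightarrow> 'a mat" where
  "hill_matrix n q m B Ls = mat m m
     (\<lambda>(k,l). conjugate (ones_vec n) \<bullet> (hadamard (B k) (mconj (Ls l)) *\<^sub>v ones_vec q))"

definition kron :: "'a::field mat \<Rightarrow> 'a mat \<Rightarrow> 'a mat" where
  "kron A B = mat (dim_row A * dim_row B) (dim_col A * dim_col B)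
     (\<lambda>(r,c). A $$ (r div dim_row B, c div dim_col B) * B $$ (r mod dim_row B, c mod dim_col B))"

definition vstack :: "nat \<Rightarrow> nat \<Rightarrow> nat \<Rightarrow> (nat \<Rightarrow> 'a mat) \<Rightarrow> 'a mat" where
  "vstack n q m A = mat (m*n) q (\<lambda>(r,c). A (r div n) $$ (r mod n, c))"

end

theory Submission
  imports Defs
begin



definition m2v :: "nat \<Rightarrow> nat \<Rightarrow> 'a mat \<Rightarrow> 'a vec" where
  "m2v nn qq M = vec (qq*nn) (\<lambda>r. M $$ (r mod nn, r div nn))"
definition v2m :: "nat \<Rightarrow> nat \<Rightarrow> 'a vec \<Rightarrow> 'a mat" where
  "v2m nn qq v = mat nn qq (\<lambda>(a,b). v $ (b*nn + a))"

lemma lt_mult_add: "(i::nat) < n \<Longrightarrow> a < m \<Longrightarrow> i*m + a < n*m"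
proof -
  assume "i < n" "a < m"
  hence "i*m + a < i*m + m" by simp
  also have "\<dots> = (i+1)*m" by simp
  also have "\<dots> \<le> n*m" using \<open>i<n\<close> by (intro mult_right_mono) auto
  finally show ?thesis .
qed

lemma divmod_simps: "(b::nat) < n \<Longrightarrow> (a*n+b) div n = a \<and> (a*n+b) mod n = b"
  by auto

lemma m2v_carrier[simp]: "m2v nn qq M \<in> carrier_vec (qq*nn)"
  unfolding m2v_def by auto

lemma v2m_carrier[simp]: "v2m nn qq v \<in> carrier_mat nn qq"
  unfolding v2m_def by auto

lemma r_bounds: "(r::nat) < qq*nn \<Longrightarrow> r mod nn < nn \<and> r div nn < qq"
  by (metis less_mult_imp_div_less mod_less_divisor mult_is_0 neq0_conv not_less0 mult.commute)

lemma v2m_m2v: "M \<in> carrier_mat nn qq \<Longrightarrow> v2m nn qq (m2v nn qq M) = M"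
  unfolding v2m_def m2v_def
  by (rule eq_matI) (auto simp: lt_mult_add)

lemma m2v_v2m: "v \<in> carrier_vec (qq*nn) \<Longrightarrow> m2v nn qq (v2m nn qq v) = v"
  unfolding v2m_def m2v_def
  by (rule eq_vecI) (auto simp: r_bounds)

lemma inj_m2v: "inj_on (m2v nn qq) (carrier_mat nn qq)"
  by (metis inj_onI v2m_m2v)
lemma inj_v2m: "inj_on (v2m nn qq) (carrier_vec (qq*nn))"
  by (metis inj_onI m2v_v2m)

lemma msum_carrier[simp]: "msum nn qq I f \<in> carrier_mat nn qq"
  unfolding msum_def by auto
lemma msum_dims[simp]: "dim_row (msum nn qq I f) = nn" "dim_col (msum nn qq I f) = qq"
  unfolding msum_def by auto
lemma msum_index[simp]: "i < nn \<Longrightarrow> j < qq \<Longrightarrow> msum nn qq I f $$ (i,j) = (\<Sum>k\<in>I. f k $$ (i,j))"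
  unfolding msum_def by auto

lemma msum_smult_index: "i < nn \<Longrightarrow> j < qq \<Longrightarrow> (\<And>k. k \<in> I \<Longrightarrow> f k \<in> carrier_mat nn qq) \<Longrightarrow>
  msum nn qq I (\<lambda>k. c k \<cdot>\<^sub>m f k) $$ (i,j) = (\<Sum>k\<in>I. c k * f k $$ (i,j))"
  by (auto intro!: sum.cong) (metis carrier_matD index_smult_mat(1))

context vec_space begin

lemma li_card_le: "finite A \<Longrightarrow> finite B \<Longrightarrow> B \<subseteq> carrier_vec n \<Longrightarrow> lin_indpt A \<Longrightarrow> A \<subseteq> span B
  \<Longrightarrow> card A \<le> card B"
  by (drule replacement) auto

lemma lin_indpt_empty': "lin_indpt {}"
  unfolding lin_dep_def by auto

lemma rank_basis:
  assumes "M \<in> carrier_mat n nc"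
  obtains S where "S \<subseteq> set (cols M)" "lin_indpt S" "set (cols M) \<subseteq> span S" "card S = rank M" "finite S"
proof -
  obtain S where S: "finite S" "maximal S (\<lambda>T. T \<subseteq> set (cols M) \<and> lin_indpt T)"
    using maximal_exists_superset[of "set (cols M)" "\<lambda>T. T \<subseteq> set (cols M) \<and> lin_indpt T" "{}"]
      lin_indpt_empty' by auto
  hence sub: "S \<subseteq> set (cols M)" and li: "lin_indpt S" unfolding maximal_def by auto
  have colsC: "set (cols M) \<subseteq> carrier_vec n" using assms cols_dim by blast
  hence SC: "S \<subseteq> carrier_vec n" using sub by auto
  have "set (cols M) \<subseteq> span S"
  proof
    fix s assume s: "s \<in> set (cols M)"
    show "s \<in> span S"
    proof (rule ccontr)
      assume ns: "s \<notin> span S"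
      hence "s \<notin> S" using in_own_span[OF SC] by auto
      hence "lin_indpt (S \<union> {s})" using lin_dep_iff_in_span[OF SC li _ \<open>s \<notin> S\<close>] s colsC ns by auto
      hence "S \<union> {s} = S" using S(2) s sub unfolding maximal_def by blast
      thus False using \<open>s \<notin> S\<close> by auto
    qed
  qed
  moreover have "card S = rank M" using rank_card_indpt[OF assms S(2)] by simp
  ultimately show ?thesis using that sub li S(1) by auto
qed

lemma MS:
  assumes nd: "n = qq*nn" and S: "S \<subseteq> carrier_mat nn qq"
  shows "M \<in> mspan nn qq S \<longleftrightarrow> M \<in> carrier_mat nn qq \<and> m2v nn qq M \<in> span (m2v nn qq ` S)"
proof
  assume "M \<in> mspan nn qq S"
  then obtain F c where F: "finite F" "F \<subseteq> S" "M = msum nn qq F (\<lambda>X. c X \<cdot>\<^sub>m X)"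
    unfolding mspan_def by auto
  have FC: "F \<subseteq> carrier_mat nn qq" using F S by auto
  have VFC: "m2v nn qq ` F \<subseteq> carrier_vec n" using nd by auto
  have "m2v nn qq M = lincomb (\<lambda>v. c (v2m nn qq v)) (m2v nn qq ` F)"
  proof (rule eq_vecI)
    show "dim_vec (m2v nn qq M) = dim_vec (lincomb (\<lambda>v. c (v2m nn qq v)) (m2v nn qq ` F))"
      using lincomb_dim[OF _ VFC] F nd by (simp add: m2v_def)
    fix r assume "r < dim_vec (lincomb (\<lambda>v. c (v2m nn qq v)) (m2v nn qq ` F))"
    hence r: "r < qq*nn" using lincomb_dim[OF _ VFC] F nd by simp
    have "lincomb (\<lambda>v. c (v2m nn qq v)) (m2v nn qq ` F) $ r
        = (\<Sum>x\<in>m2v nn qq ` F. c (v2m nn qq x) * x $ r)"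
      using lincomb_index[OF _ VFC] r nd by simp
    also have "\<dots> = (\<Sum>X\<in>F. c (v2m nn qq (m2v nn qq X)) * m2v nn qq X $ r)"
      by (rule sum.reindex_cong[OF inj_on_subset[OF inj_m2v FC]]) auto
    also have "\<dots> = (\<Sum>X\<in>F. c X * X $$ (r mod nn, r div nn))"
      apply (intro sum.cong refl)
      subgoal for X using FC r by (simp add: v2m_m2v subset_iff) (simp add: m2v_def)
      done
    also have "\<dots> = m2v nn qq M $ r"
    proof -
      have "m2v nn qq M $ r = M $$ (r mod nn, r div nn)" by (simp add: m2v_def r)
      also have "\<dots> = (\<Sum>X\<in>F. c X * X $$ (r mod nn, r div nn))"
        unfolding F(3) using r_bounds[OF r] FC by (intro msum_smult_index) auto
      finally show ?thesis by simp
    qed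
    finally show "m2v nn qq M $ r = lincomb (\<lambda>v. c (v2m nn qq v)) (m2v nn qq ` F) $ r" by simp
  qed
  moreover have "m2v nn qq ` F \<subseteq> m2v nn qq ` S" using F by auto
  ultimately show "M \<in> carrier_mat nn qq \<and> m2v nn qq M \<in> span (m2v nn qq ` S)"
    using F by (auto intro!: in_spanI)
next
  assume "M \<in> carrier_mat nn qq \<and> m2v nn qq M \<in> span (m2v nn qq ` S)"
  hence MC: "M \<in> carrier_mat nn qq" and "m2v nn qq M \<in> span (m2v nn qq ` S)" by auto
  then obtain a A where A: "m2v nn qq M = lincomb a A" "finite A" "A \<subseteq> m2v nn qq ` S"
    using in_spanE by blast
  have AC: "A \<subseteq> carrier_vec n" using A(3) nd by auto
  have AC': "A \<subseteq> carrier_vec (qq*nn)" using AC nd by simp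
  have F: "finite (v2m nn qq ` A)" "v2m nn qq ` A \<subseteq> S"
  proof -
    show "finite (v2m nn qq ` A)" using A(2) by simp
    show "v2m nn qq ` A \<subseteq> S"
    proof
      fix X assume "X \<in> v2m nn qq ` A"
      then obtain x where x: "x \<in> A" "X = v2m nn qq x" by auto
      then obtain Y where Y: "Y \<in> S" "x = m2v nn qq Y" using A(3) by auto
      have "X = Y" using x Y S v2m_m2v[of Y nn qq] by auto
      thus "X \<in> S" using Y by simp
    qed
  qed
  have "M = msum nn qq (v2m nn qq ` A) (\<lambda>X. a (m2v nn qq X) \<cdot>\<^sub>m X)"
  proof (rule eq_matI)
    fix i j assume ij: "i < dim_row (msum nn qq (v2m nn qq ` A) (\<lambda>X. a (m2v nn qq X) \<cdot>\<^sub>m X))"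
      "j < dim_col (msum nn qq (v2m nn qq ` A) (\<lambda>X. a (m2v nn qq X) \<cdot>\<^sub>m X))"
    hence i: "i < nn" and j: "j < qq" by auto
    have r: "j*nn + i < qq*nn" using lt_mult_add[OF j i] .
    have "msum nn qq (v2m nn qq ` A) (\<lambda>X. a (m2v nn qq X) \<cdot>\<^sub>m X) $$ (i,j)
      = (\<Sum>X\<in>v2m nn qq ` A. a (m2v nn qq X) * X $$ (i,j))"
      using i j by (intro msum_smult_index) auto
    also have "\<dots> = (\<Sum>x\<in>A. a (m2v nn qq (v2m nn qq x)) * v2m nn qq x $$ (i,j))"
      by (rule sum.reindex_cong[OF inj_on_subset[OF inj_v2m AC']]) auto
    also have "\<dots> = (\<Sum>x\<in>A. a x * x $ (j*nn+i))"
      apply (intro sum.cong refl)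
      subgoal for x using AC' i j by (simp add: m2v_v2m subset_iff) (simp add: v2m_def)
      done
    also have "\<dots> = lincomb a A $ (j*nn+i)"
      using lincomb_index[OF _ AC] r nd by simp
    also have "\<dots> = M $$ (i,j)"
      unfolding A(1)[symmetric] m2v_def using r i j by simp
    finally show "M $$ (i,j) = msum nn qq (v2m nn qq ` A) (\<lambda>X. a (m2v nn qq X) \<cdot>\<^sub>m X) $$ (i,j)" by simp
  qed (use MC in auto)
  thus "M \<in> mspan nn qq S" unfolding mspan_def using F
    by (intro CollectI exI[of _ "v2m nn qq ` A"] exI[of _ "\<lambda>X. a (m2v nn qq X)"] conjI)
qed

end




lemma mspan_self: assumes "S \<subseteq> carrier_mat nn qq" shows "S \<subseteq> mspan nn qq S"
proof
  fix X assume X: "X \<in> S"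
  have "X = msum nn qq {X} (\<lambda>Y. 1 \<cdot>\<^sub>m Y)"
    using X assms by (intro eq_matI) (auto simp: subset_iff)
  thus "X \<in> mspan nn qq S" unfolding mspan_def using X
    by (intro CollectI exI[of _ "{X}"] exI[of _ "\<lambda>Y. 1"] conjI) auto
qed

lemma mspan_carrier: "mspan nn qq S \<subseteq> carrier_mat nn qq"
  unfolding mspan_def by auto

lemma mspan_trans:
  assumes U: "U \<subseteq> carrier_mat nn qq" and T: "T \<subseteq> mspan nn qq U"
  shows "mspan nn qq T \<subseteq> mspan nn qq (U :: 'a::field mat set)"
proof
  interpret V: vec_space "TYPE('a)" "qq*nn" .
  have TC: "T \<subseteq> carrier_mat nn qq" using T mspan_carrier by blast
  fix M assume M: "M \<in> mspan nn qq T"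
  have 1: "M \<in> carrier_mat nn qq" "m2v nn qq M \<in> V.span (m2v nn qq ` T)"
    using V.MS[OF refl TC] M by auto
  have "m2v nn qq ` T \<subseteq> V.span (m2v nn qq ` U)"
    using V.MS[OF refl U] T by auto
  hence "V.span (m2v nn qq ` T) \<subseteq> V.span (m2v nn qq ` U)"
    by (intro V.span_subsetI) auto
  thus "M \<in> mspan nn qq U" using 1 V.MS[OF refl U] by auto
qed

lemma IF1:
  assumes I: "finite I" and f: "\<And>k. k \<in> I \<Longrightarrow> f k \<in> carrier_mat nn qq"
  shows "msum nn qq I (\<lambda>k. c k \<cdot>\<^sub>m f k) \<in> mspan nn qq (f ` I)"
proof -
  define d where "d X = (\<Sum>k\<in>{k\<in>I. f k = X}. c k)" for X
  have "msum nn qq I (\<lambda>k. c k \<cdot>\<^sub>m f k) = msum nn qq (f ` I) (\<lambda>X. d X \<cdot>\<^sub>m X)"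
  proof (rule eq_matI)
    fix i j assume "i < dim_row (msum nn qq (f ` I) (\<lambda>X. d X \<cdot>\<^sub>m X))"
      "j < dim_col (msum nn qq (f ` I) (\<lambda>X. d X \<cdot>\<^sub>m X))"
    hence i: "i < nn" and j: "j < qq" by auto
    have "msum nn qq (f ` I) (\<lambda>X. d X \<cdot>\<^sub>m X) $$ (i,j) = (\<Sum>X\<in>f ` I. d X * X $$ (i,j))"
      using i j f by (intro msum_smult_index) auto
    also have "\<dots> = (\<Sum>X\<in>f ` I. \<Sum>k\<in>{k\<in>I. f k = X}. c k * f k $$ (i,j))"
      unfolding d_def sum_distrib_right by (intro sum.cong refl) auto
    also have "\<dots> = (\<Sum>k\<in>I. c k * f k $$ (i,j))"
      by (rule sum.image_gen[symmetric]) (rule I)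
    also have "\<dots> = msum nn qq I (\<lambda>k. c k \<cdot>\<^sub>m f k) $$ (i,j)"
      using i j f by (intro msum_smult_index[symmetric]) auto
    finally show "msum nn qq I (\<lambda>k. c k \<cdot>\<^sub>m f k) $$ (i,j) = msum nn qq (f ` I) (\<lambda>X. d X \<cdot>\<^sub>m X) $$ (i,j)" by simp
  qed auto
  thus ?thesis unfolding mspan_def using I
    by (intro CollectI exI[of _ "f ` I"] exI[of _ d] conjI) auto
qed

lemma IF2:
  assumes I: "finite I" and f: "\<And>k. k \<in> I \<Longrightarrow> f k \<in> carrier_mat nn qq"
    and M: "M \<in> mspan nn qq (f ` I)"
  shows "\<exists>c. M = msum nn qq I (\<lambda>k. c k \<cdot>\<^sub>m f k)"
proof -
  obtain F d where F: "finite F" "F \<subseteq> f ` I" "M = msum nn qq F (\<lambda>X. d X \<cdot>\<^sub>m X)"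
    using M unfolding mspan_def by auto
  define g where "g = inv_into I f"
  have fg: "X \<in> F \<Longrightarrow> f (g X) = X \<and> g X \<in> I" for X
    using F(2) unfolding g_def by (auto intro: f_inv_into_f inv_into_into)
  have injg: "inj_on g F" by (metis fg inj_onI)
  define c where "c k = (if k \<in> g ` F then d (f k) else 0)" for k
  have "M = msum nn qq I (\<lambda>k. c k \<cdot>\<^sub>m f k)"
  proof (rule eq_matI)
    fix i j assume "i < dim_row (msum nn qq I (\<lambda>k. c k \<cdot>\<^sub>m f k))"
      "j < dim_col (msum nn qq I (\<lambda>k. c k \<cdot>\<^sub>m f k))"
    hence i: "i < nn" and j: "j < qq" by auto
    have FC: "X \<in> F \<Longrightarrow> X \<in> carrier_mat nn qq" for X using F(2) f by auto
    have "msum nn qq I (\<lambda>k. c k \<cdot>\<^sub>m f k) $$ (i,j) = (\<Sum>k\<in>I. c k * f k $$ (i,j))"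
      using i j f by (intro msum_smult_index) auto
    also have "\<dots> = (\<Sum>k\<in>g ` F. d (f k) * f k $$ (i,j))"
      unfolding c_def using fg I by (intro sum.mono_neutral_cong_right) auto
    also have "\<dots> = (\<Sum>X\<in>F. d (f (g X)) * f (g X) $$ (i,j))"
      by (rule sum.reindex[OF injg, unfolded comp_def])
    also have "\<dots> = (\<Sum>X\<in>F. d X * X $$ (i,j))"
      using fg by (intro sum.cong) auto
    also have "\<dots> = M $$ (i,j)"
      unfolding F(3) using i j FC by (intro msum_smult_index[symmetric]) auto
    finally show "M $$ (i,j) = msum nn qq I (\<lambda>k. c k \<cdot>\<^sub>m f k) $$ (i,j)" by simp
  qed (use F in auto)
  thus ?thesis by blast
qed

lemma D1:
  assumes Bl: "Bl \<subseteq> carrier_mat nn qq" and Mx: "Mx \<in> carrier_mat (qq*nn) nc"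
    and cols: "set (cols Mx) = m2v nn qq ` Bl"
    and T: "finite T" "T \<subseteq> carrier_mat nn qq" "Bl \<subseteq> mspan nn qq T"
  shows "vec_space.rank (qq*nn) Mx \<le> card T"
proof -
  interpret V: vec_space "TYPE('a::field)" "qq*nn" .
  obtain S where S: "S \<subseteq> set (cols Mx)" "V.lin_indpt S" "set (cols Mx) \<subseteq> V.span S"
    "card S = V.rank Mx" "finite S" using V.rank_basis[OF Mx] by blast
  have colsC: "set (cols Mx) \<subseteq> carrier_vec (qq*nn)" using Mx by (metis carrier_matD(1) cols_dim)
  have VT: "m2v nn qq ` T \<subseteq> carrier_vec (qq*nn)" by auto
  have "set (cols Mx) \<subseteq> V.span (m2v nn qq ` T)"
    using cols V.MS[OF refl T(2)] T(3) by auto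
  hence "V.span (set (cols Mx)) \<subseteq> V.span (m2v nn qq ` T)"
    by (intro V.span_subsetI[OF VT])
  moreover have "S \<subseteq> V.span (set (cols Mx))"
    using S(1) V.in_own_span[OF colsC] by blast
  ultimately have SsT: "S \<subseteq> V.span (m2v nn qq ` T)" by blast
  have "card S \<le> card (m2v nn qq ` T)"
    using V.li_card_le[OF S(5) finite_imageI[OF T(1)] VT S(2) SsT] .
  also have "\<dots> \<le> card T" using T by (intro card_image_le) auto
  finally show ?thesis using S by simp
qed

lemma D3:
  assumes Bl: "Bl \<subseteq> carrier_mat nn qq" and Mx: "Mx \<in> carrier_mat (qq*nn) nc"
    and cols: "set (cols Mx) = m2v nn qq ` Bl"
    and T: "finite T" "T \<subseteq> carrier_mat nn qq" "Bl \<subseteq> mspan nn qq T"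
    and card: "card T \<le> vec_space.rank (qq*nn) Mx"
  shows "T \<subseteq> mspan nn qq (Bl :: 'a::field mat set)"
proof
  interpret V: vec_space "TYPE('a::field)" "qq*nn" .
  obtain S where S: "S \<subseteq> set (cols Mx)" "V.lin_indpt S" "set (cols Mx) \<subseteq> V.span S"
    "card S = V.rank Mx" "finite S" using V.rank_basis[OF Mx] by blast
  have colsC: "set (cols Mx) \<subseteq> carrier_vec (qq*nn)" using Mx by (metis carrier_matD(1) cols_dim)
  have SC: "S \<subseteq> carrier_vec (qq*nn)" using S colsC by auto
  have VT: "m2v nn qq ` T \<subseteq> carrier_vec (qq*nn)" by auto
  have "set (cols Mx) \<subseteq> V.span (m2v nn qq ` T)"
    using cols V.MS[OF refl T(2)] T(3) by auto
  hence "V.span (set (cols Mx)) \<subseteq> V.span (m2v nn qq ` T)"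
    by (intro V.span_subsetI[OF VT])
  moreover have "S \<subseteq> V.span (set (cols Mx))"
    using S(1) V.in_own_span[OF colsC] by blast
  ultimately have SsT: "S \<subseteq> V.span (m2v nn qq ` T)" by blast
  fix t assume t: "t \<in> T"
  have tC: "t \<in> carrier_mat nn qq" using t T by auto
  have "m2v nn qq t \<in> V.span S"
  proof (rule ccontr)
    assume ns: "m2v nn qq t \<notin> V.span S"
    hence nS: "m2v nn qq t \<notin> S" using V.in_own_span[OF SC] by auto
    hence li: "V.lin_indpt (S \<union> {m2v nn qq t})"
      using V.lin_dep_iff_in_span[OF SC S(2) _ nS] ns by auto
    have "S \<union> {m2v nn qq t} \<subseteq> V.span (m2v nn qq ` T)"
      using SsT V.in_own_span[OF VT] t by auto
    hence "card (S \<union> {m2v nn qq t}) \<le> card (m2v nn qq ` T)"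
      using V.li_card_le[OF _ finite_imageI[OF T(1)] VT li] S(5) by blast
    also have "\<dots> \<le> card T" using T by (intro card_image_le) auto
    finally show False using nS S card by simp
  qed
  hence "m2v nn qq t \<in> V.span (set (cols Mx))"
    using V.span_is_monotone[OF S(1)] by auto
  thus "t \<in> mspan nn qq Bl" using V.MS[OF refl Bl] cols tC by auto
qed




lemma D2:
  assumes Bl: "Bl \<subseteq> carrier_mat nn qq" and Mx: "Mx \<in> carrier_mat (qq*nn) nc"
    and cols: "set (cols Mx) = m2v nn qq ` Bl"
    and r: "r = vec_space.rank (qq*nn) Mx"
    and f: "\<And>k. k < r \<Longrightarrow> f k \<in> carrier_mat nn qq"
    and sp: "Bl \<subseteq> mspan nn qq (f ` {..<r})"
    and z: "msum nn qq {..<r} (\<lambda>k. c k \<cdot>\<^sub>m f k) = 0\<^sub>m nn qq"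
    and k: "k < r"
  shows "c k = (0::'a::field)"
proof (rule ccontr)
  assume ck: "c k \<noteq> 0"
  let ?I = "{..<r} - {k}"
  have fk: "f k = msum nn qq ?I (\<lambda>l. (- c l / c k) \<cdot>\<^sub>m f l)"
  proof (rule eq_matI)
    fix i j assume "i < dim_row (msum nn qq ?I (\<lambda>l. (- c l / c k) \<cdot>\<^sub>m f l))"
      "j < dim_col (msum nn qq ?I (\<lambda>l. (- c l / c k) \<cdot>\<^sub>m f l))"
    hence i: "i < nn" and j: "j < qq" by auto
    have "0 = msum nn qq {..<r} (\<lambda>k. c k \<cdot>\<^sub>m f k) $$ (i,j)" using z i j by simp
    also have "\<dots> = (\<Sum>l<r. c l * f l $$ (i,j))" using i j f by (intro msum_smult_index) auto
    also have "\<dots> = c k * f k $$ (i,j) + (\<Sum>l\<in>?I. c l * f l $$ (i,j))"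
      using k by (subst sum.remove[of _ k]) auto
    finally have e: "(\<Sum>l\<in>?I. c l * f l $$ (i,j)) = - (c k * f k $$ (i,j))"
      by (simp add: eq_neg_iff_add_eq_0 add.commute)
    have "msum nn qq ?I (\<lambda>l. (- c l / c k) \<cdot>\<^sub>m f l) $$ (i,j) = (\<Sum>l\<in>?I. (- c l / c k) * f l $$ (i,j))"
      using i j f by (intro msum_smult_index) auto
    also have "\<dots> = (- 1 / c k) * (\<Sum>l\<in>?I. c l * f l $$ (i,j))"
      by (simp add: sum_distrib_left)
    also have "\<dots> = f k $$ (i,j)" using ck unfolding e by (simp add: field_simps)
    finally show "f k $$ (i,j) = msum nn qq ?I (\<lambda>l. (- c l / c k) \<cdot>\<^sub>m f l) $$ (i,j)" by simp
  qed (use f k in auto)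
  have fIC: "f ` ?I \<subseteq> carrier_mat nn qq" using f by auto
  have "f ` {..<r} \<subseteq> mspan nn qq (f ` ?I)"
  proof
    fix X assume "X \<in> f ` {..<r}"
    then obtain l where l: "l < r" "X = f l" by auto
    show "X \<in> mspan nn qq (f ` ?I)"
    proof (cases "l = k")
      case True
      thus ?thesis using l fk IF1[of ?I f nn qq "\<lambda>l. - c l / c k"] f by auto
    next
      case False
      thus ?thesis using l mspan_self[OF fIC] by auto
    qed
  qed
  hence "mspan nn qq (f ` {..<r}) \<subseteq> mspan nn qq (f ` ?I)" by (intro mspan_trans[OF fIC])
  hence "Bl \<subseteq> mspan nn qq (f ` ?I)" using sp by auto
  hence "r \<le> card (f ` ?I)" using D1[OF Bl Mx cols _ fIC] r by auto
  also have "\<dots> \<le> card ?I" by (intro card_image_le) auto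
  also have "\<dots> = r - 1" using k by simp
  finally show False using k by simp
qed

lemma mult_index: "A \<in> carrier_mat na nb \<Longrightarrow> B \<in> carrier_mat nb nc \<Longrightarrow> i < na \<Longrightarrow> j < nc \<Longrightarrow>
  (A * B) $$ (i,j) = (\<Sum>t<nb. A $$ (i,t) * B $$ (t,j))"
  by (auto simp: scalar_prod_def atLeast0LessThan intro!: sum.cong)

lemma madj_carrier: "A \<in> carrier_mat a b \<Longrightarrow> madj A \<in> carrier_mat b a"
  unfolding madj_def by auto
lemma madj_dims[simp]: "dim_row (madj A) = dim_col A" "dim_col (madj A) = dim_row A"
  unfolding madj_def by auto
lemma madj_index: "A \<in> carrier_mat a b \<Longrightarrow> j < b \<Longrightarrow> i < a \<Longrightarrow> madj A $$ (j,i) = conjugate (A $$ (i,j))"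
  unfolding madj_def by auto

lemma munit_carrier: "munit q b j \<in> carrier_mat q q"
  unfolding munit_def by auto
lemma munit_index: "b' < q \<Longrightarrow> j' < q \<Longrightarrow> munit q b j $$ (b',j') = (if b' = b \<and> j' = j then 1 else 0)"
  unfolding munit_def by auto

lemma mblock_index: "i < n \<Longrightarrow> j < q \<Longrightarrow> a < n \<Longrightarrow> b < q \<Longrightarrow>
  mblock L n q i j $$ (a,b) = L (munit q b j) $$ (a,i)"
  unfolding mblock_def matricization_def
  using lt_mult_add[of i n a n] lt_mult_add[of j q b q] by simp

lemma mblock_carrier: "mblock L n q i j \<in> carrier_mat n q"
  unfolding mblock_def by auto

definition rep :: "nat \<Rightarrow> nat \<Rightarrow> (nat \<Rightarrow> nat \<Rightarrow> 'a::field mat) \<Rightarrow> 'a mat \<Rightarrow> 'a mat" where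
  "rep nn qq X V = mat nn nn (\<lambda>(a,i). \<Sum>b<qq. \<Sum>j<qq. V $$ (b,j) * X i j $$ (a,b))"

lemma rep_unit: "a < nn \<Longrightarrow> i < nn \<Longrightarrow> b < qq \<Longrightarrow> j < qq \<Longrightarrow>
  rep nn qq X (munit qq b j) $$ (a,i) = X i j $$ (a,b)"
proof -
  assume a: "a < nn" "i < nn" "b < qq" "j < qq"
  have "rep nn qq X (munit qq b j) $$ (a,i) = (\<Sum>b'<qq. \<Sum>j'<qq. (if b' = b \<and> j' = j then X i j' $$ (a,b') else 0))"
    unfolding rep_def using a by (auto simp: munit_index intro!: sum.cong)
  also have "\<dots> = (\<Sum>b'<qq. (if b' = b then X i j $$ (a,b') else 0))"
    using a by (intro sum.cong refl) (auto simp: sum.delta)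
  also have "\<dots> = X i j $$ (a,b)" using a by (simp add: sum.delta)
  finally show ?thesis .
qed

lemma rep_cong: "(\<And>i j. i < nn \<Longrightarrow> j < qq \<Longrightarrow> X i j = Y i j) \<Longrightarrow> rep nn qq X V = rep nn qq Y V"
  unfolding rep_def by (intro eq_matI) auto

lemma lin_zero:
  assumes lin: "linear_map_on n q L"
  shows "L (0\<^sub>m q q) = 0\<^sub>m n n"
proof -
  have Z: "0\<^sub>m q q = (0::'a) \<cdot>\<^sub>m 0\<^sub>m q q + 0 \<cdot>\<^sub>m 0\<^sub>m q q" by (intro eq_matI) auto
  have C: "L (0\<^sub>m q q) \<in> carrier_mat n n" using lin unfolding linear_map_on_def by auto
  have "L ((0::'a) \<cdot>\<^sub>m 0\<^sub>m q q + 0 \<cdot>\<^sub>m 0\<^sub>m q q) = 0 \<cdot>\<^sub>m L (0\<^sub>m q q) + 0 \<cdot>\<^sub>m L (0\<^sub>m q q)"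
    using lin zero_carrier_mat[of q q] unfolding linear_map_on_def by blast
  hence "L (0\<^sub>m q q) = 0 \<cdot>\<^sub>m L (0\<^sub>m q q) + 0 \<cdot>\<^sub>m L (0\<^sub>m q q)"
    unfolding Z[symmetric] .
  also have "\<dots> = 0\<^sub>m n n" using C by (intro eq_matI) auto
  finally show ?thesis .
qed

lemma L_msum:
  assumes lin: "linear_map_on n q L" and F: "finite F" and X: "\<And>x. x \<in> F \<Longrightarrow> X x \<in> carrier_mat q q"
  shows "L (msum q q F (\<lambda>x. c x \<cdot>\<^sub>m X x)) = msum n n F (\<lambda>x. c x \<cdot>\<^sub>m L (X x))"
  using F X
proof (induction F rule: finite_induct)
  case empty
  have "msum q q {} (\<lambda>x. c x \<cdot>\<^sub>m X x) = 0\<^sub>m q q" by (intro eq_matI) auto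
  moreover have "msum n n {} (\<lambda>x. c x \<cdot>\<^sub>m L (X x)) = 0\<^sub>m n n" by (intro eq_matI) auto
  ultimately show ?case using lin_zero[OF lin] by simp
next
  case (insert x F)
  have Xx: "X x \<in> carrier_mat q q" using insert by auto
  have LXx: "L (X x) \<in> carrier_mat n n" using Xx lin unfolding linear_map_on_def by auto
  have LXF: "\<And>y. y \<in> F \<Longrightarrow> L (X y) \<in> carrier_mat n n" using insert lin unfolding linear_map_on_def by auto
  have "msum q q (insert x F) (\<lambda>x. c x \<cdot>\<^sub>m X x) = c x \<cdot>\<^sub>m X x + 1 \<cdot>\<^sub>m msum q q F (\<lambda>x. c x \<cdot>\<^sub>m X x)"
    using insert Xx by (intro eq_matI) (auto simp: sum.insert)
  hence "L (msum q q (insert x F) (\<lambda>x. c x \<cdot>\<^sub>m X x)) = c x \<cdot>\<^sub>m L (X x) + 1 \<cdot>\<^sub>m L (msum q q F (\<lambda>x. c x \<cdot>\<^sub>m X x))"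
    using lin Xx unfolding linear_map_on_def by auto
  also have "\<dots> = c x \<cdot>\<^sub>m L (X x) + 1 \<cdot>\<^sub>m msum n n F (\<lambda>x. c x \<cdot>\<^sub>m L (X x))"
    using insert by auto
  also have "\<dots> = msum n n (insert x F) (\<lambda>x. c x \<cdot>\<^sub>m L (X x))"
    using insert LXx LXF by (intro eq_matI) (auto simp: sum.insert)
  finally show ?case .
qed

lemma L_rep:
  assumes lin: "linear_map_on n q L" and V: "V \<in> carrier_mat q q"
  shows "L V = rep n q (mblock L n q) V"
proof -
  let ?P = "{..<q} \<times> {..<q}"
  have "V = msum q q ?P (\<lambda>p. V $$ p \<cdot>\<^sub>m munit q (fst p) (snd p))"
  proof (rule eq_matI)
    fix a b assume ab: "a < dim_row (msum q q ?P (\<lambda>p. V $$ p \<cdot>\<^sub>m munit q (fst p) (snd p)))"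
      "b < dim_col (msum q q ?P (\<lambda>p. V $$ p \<cdot>\<^sub>m munit q (fst p) (snd p)))"
    hence a: "a < q" "b < q" by auto
    have "msum q q ?P (\<lambda>p. V $$ p \<cdot>\<^sub>m munit q (fst p) (snd p)) $$ (a,b)
        = (\<Sum>p\<in>?P. V $$ p * munit q (fst p) (snd p) $$ (a,b))"
      using a munit_carrier by (intro msum_smult_index) auto
    also have "\<dots> = (\<Sum>p\<in>?P. if p = (a,b) then V $$ (a,b) else 0)"
      using a by (intro sum.cong refl) (auto simp: munit_index)
    also have "\<dots> = V $$ (a,b)" using a by (simp add: sum.delta')
    finally show "V $$ (a,b) = msum q q ?P (\<lambda>p. V $$ p \<cdot>\<^sub>m munit q (fst p) (snd p)) $$ (a,b)" by simp
  qed (use V in auto)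
  hence "L V = msum n n ?P (\<lambda>p. V $$ p \<cdot>\<^sub>m L (munit q (fst p) (snd p)))"
    using L_msum[OF lin, of ?P "\<lambda>p. munit q (fst p) (snd p)" "\<lambda>p. V $$ p"] munit_carrier by auto
  also have "\<dots> = rep n q (mblock L n q) V"
  proof (rule eq_matI)
    fix a i assume "a < dim_row (rep n q (mblock L n q) V)" "i < dim_col (rep n q (mblock L n q) V)"
    hence a: "a < n" "i < n" unfolding rep_def by auto
    have LC: "\<And>p. L (munit q (fst p) (snd p)) \<in> carrier_mat n n"
      using lin munit_carrier unfolding linear_map_on_def by auto
    have "msum n n ?P (\<lambda>p. V $$ p \<cdot>\<^sub>m L (munit q (fst p) (snd p))) $$ (a,i)
      = (\<Sum>p\<in>?P. V $$ p * L (munit q (fst p) (snd p)) $$ (a,i))"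
      using a LC by (intro msum_smult_index) auto
    also have "\<dots> = (\<Sum>b<q. \<Sum>j<q. V $$ (b,j) * L (munit q b j) $$ (a,i))"
      by (simp add: sum.cartesian_product split_beta)
    also have "\<dots> = rep n q (mblock L n q) V $$ (a,i)"
      unfolding rep_def using a by (auto simp: mblock_index intro!: sum.cong)
    finally show "msum n n ?P (\<lambda>p. V $$ p \<cdot>\<^sub>m L (munit q (fst p) (snd p))) $$ (a,i) = rep n q (mblock L n q) V $$ (a,i)" .
  qed (auto simp: rep_def)
  finally show ?thesis .
qed

lemma sum4_swap: "(\<Sum>k\<in>K. \<Sum>l\<in>L. \<Sum>j\<in>J. \<Sum>b\<in>B. f k l j b) = (\<Sum>b\<in>B. \<Sum>j\<in>J. \<Sum>l\<in>L. \<Sum>k\<in>K. f k l j b)"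
proof -
  have "(\<Sum>k\<in>K. \<Sum>l\<in>L. \<Sum>j\<in>J. \<Sum>b\<in>B. f k l j b) = (\<Sum>l\<in>L. \<Sum>k\<in>K. \<Sum>j\<in>J. \<Sum>b\<in>B. f k l j b)"
    by (rule sum.swap)
  also have "\<dots> = (\<Sum>l\<in>L. \<Sum>j\<in>J. \<Sum>k\<in>K. \<Sum>b\<in>B. f k l j b)"
    by (rule sum.cong[OF refl], rule sum.swap)
  also have "\<dots> = (\<Sum>j\<in>J. \<Sum>l\<in>L. \<Sum>k\<in>K. \<Sum>b\<in>B. f k l j b)"
    by (rule sum.swap)
  also have "\<dots> = (\<Sum>j\<in>J. \<Sum>l\<in>L. \<Sum>b\<in>B. \<Sum>k\<in>K. f k l j b)"
    by (intro sum.cong refl sum.swap)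
  also have "\<dots> = (\<Sum>j\<in>J. \<Sum>b\<in>B. \<Sum>l\<in>L. \<Sum>k\<in>K. f k l j b)"
    by (intro sum.cong refl sum.swap)
  also have "\<dots> = (\<Sum>b\<in>B. \<Sum>j\<in>J. \<Sum>l\<in>L. \<Sum>k\<in>K. f k l j b)"
    by (rule sum.swap)
  finally show ?thesis .
qed

definition Gm :: "nat \<Rightarrow> nat \<Rightarrow> nat \<Rightarrow> (nat \<Rightarrow> 'a::conjugatable_field mat) \<Rightarrow> 'a mat \<Rightarrow> nat \<Rightarrow> nat \<Rightarrow> 'a mat" where
  "Gm n q m A H i j = msum n q {..<m} (\<lambda>l. (\<Sum>k<m. H $$ (k,l) * conjugate (A k $$ (i,j))) \<cdot>\<^sub>m A l)"

lemma hill_sum_rep: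
  assumes A: "\<And>k. k < m \<Longrightarrow> A k \<in> carrier_mat n q" and V: "V \<in> carrier_mat q q"
  shows "msum n n ({..<m} \<times> {..<m}) (\<lambda>(k,l). H $$ (k,l) \<cdot>\<^sub>m (A l * V * madj (A k)))
       = rep n q (Gm n q m A H) V"
proof (rule eq_matI)
  fix a i assume "a < dim_row (rep n q (Gm n q m A H) V)" "i < dim_col (rep n q (Gm n q m A H) V)"
  hence a: "a < n" "i < n" unfolding rep_def by auto
  have prod: "(A l * V * madj (A k)) $$ (a,i) = (\<Sum>j<q. (\<Sum>b<q. A l $$ (a,b) * V $$ (b,j)) * conjugate (A k $$ (i,j)))"
    if "k < m" "l < m" for k l
  proof -
    have AV: "A l * V \<in> carrier_mat n q" using A[OF that(2)] V by auto
    have "(A l * V * madj (A k)) $$ (a,i) = (\<Sum>j<q. (A l * V) $$ (a,j) * madj (A k) $$ (j,i))"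
      by (rule mult_index[OF AV madj_carrier[OF A[OF that(1)]] a])
    also have "\<dots> = (\<Sum>j<q. (\<Sum>b<q. A l $$ (a,b) * V $$ (b,j)) * conjugate (A k $$ (i,j)))"
      apply (intro sum.cong refl)
      subgoal for j using a by (simp add: mult_index[OF A[OF that(2)] V] madj_index[OF A[OF that(1)]])
      done
    finally show ?thesis .
  qed
  have "msum n n ({..<m} \<times> {..<m}) (\<lambda>(k,l). H $$ (k,l) \<cdot>\<^sub>m (A l * V * madj (A k))) $$ (a,i)
     = (\<Sum>p\<in>{..<m} \<times> {..<m}. H $$ p * (A (snd p) * V * madj (A (fst p))) $$ (a,i))"
    using a apply (simp only: msum_index)
    apply (intro sum.cong refl)
    subgoal for p using A[of "fst p"] A[of "snd p"] V a by (cases p) auto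
    done
  also have "\<dots> = (\<Sum>k<m. \<Sum>l<m. H $$ (k,l) * (A l * V * madj (A k)) $$ (a,i))"
    by (simp add: sum.cartesian_product split_beta)
  also have "\<dots> = (\<Sum>k<m. \<Sum>l<m. \<Sum>j<q. \<Sum>b<q. H $$ (k,l) * A l $$ (a,b) * V $$ (b,j) * conjugate (A k $$ (i,j)))"
    by (intro sum.cong refl) (simp add: prod sum_distrib_left sum_distrib_right mult_ac)
  also have "\<dots> = (\<Sum>b<q. \<Sum>j<q. \<Sum>l<m. \<Sum>k<m. H $$ (k,l) * A l $$ (a,b) * V $$ (b,j) * conjugate (A k $$ (i,j)))"
    by (rule sum4_swap)
  also have "\<dots> = rep n q (Gm n q m A H) V $$ (a,i)"
    unfolding rep_def using a apply simp
    apply (intro sum.cong refl)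
    subgoal for b j unfolding Gm_def using A a
      by (subst msum_smult_index) (auto simp: sum_distrib_left sum_distrib_right mult_ac)
    done
  finally show "msum n n ({..<m} \<times> {..<m}) (\<lambda>(k,l). H $$ (k,l) \<cdot>\<^sub>m (A l * V * madj (A k))) $$ (a,i) = rep n q (Gm n q m A H) V $$ (a,i)" .
qed (auto simp: rep_def)




lemma hill_rep_iff:
  assumes lin: "linear_map_on n q L" and A: "\<And>k. k < m \<Longrightarrow> A k \<in> carrier_mat n q"
    and H: "H \<in> carrier_mat m m"
  shows "hill_rep L n q m A H \<longleftrightarrow> (\<forall>i<n. \<forall>j<q. mblock L n q i j = Gm n q m A H i j)"
proof
  assume hr: "hill_rep L n q m A H"
  have hrV: "\<And>V::'a mat. V \<in> carrier_mat q q \<Longrightarrow> L V = msum n n ({..<m} \<times> {..<m}) (\<lambda>(k,l). H $$ (k,l) \<cdot>\<^sub>m (A l * V * madj (A k)))"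
    using hr unfolding hill_rep_def by blast
  show "\<forall>i<n. \<forall>j<q. mblock L n q i j = Gm n q m A H i j"
  proof (intro allI impI)
    fix i j assume ij: "i < n" "j < q"
    show "mblock L n q i j = Gm n q m A H i j"
    proof (rule eq_matI)
      fix a b assume "a < dim_row (Gm n q m A H i j)" "b < dim_col (Gm n q m A H i j)"
      hence ab: "a < n" "b < q" unfolding Gm_def by auto
      have "mblock L n q i j $$ (a,b) = rep n q (mblock L n q) (munit q b j) $$ (a,i)"
        using ab ij by (simp add: rep_unit)
      also have "\<dots> = L (munit q b j) $$ (a,i)" using L_rep[OF lin munit_carrier] by simp
      also have "\<dots> = msum n n ({..<m} \<times> {..<m}) (\<lambda>(k,l). H $$ (k,l) \<cdot>\<^sub>m (A l * munit q b j * madj (A k))) $$ (a,i)"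
        using hrV[OF munit_carrier] by simp
      also have "\<dots> = rep n q (Gm n q m A H) (munit q b j) $$ (a,i)"
        using hill_sum_rep[OF A munit_carrier] by simp
      also have "\<dots> = Gm n q m A H i j $$ (a,b)" using ab ij by (simp add: rep_unit)
      finally show "mblock L n q i j $$ (a,b) = Gm n q m A H i j $$ (a,b)" .
    qed (auto simp: mblock_def Gm_def)
  qed
next
  assume eq: "\<forall>i<n. \<forall>j<q. mblock L n q i j = Gm n q m A H i j"
  show "hill_rep L n q m A H"
    unfolding hill_rep_def
  proof (intro conjI ballI allI impI)
    show "\<And>k. k < m \<Longrightarrow> A k \<in> carrier_mat n q" by (rule A)
    show "H \<in> carrier_mat m m" by (rule H)
    fix V :: "'a mat" assume V: "V \<in> carrier_mat q q"
    have "L V = rep n q (mblock L n q) V" by (rule L_rep[OF lin V])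
    also have "\<dots> = rep n q (Gm n q m A H) V" using eq by (intro rep_cong) auto
    also have "\<dots> = msum n n ({..<m} \<times> {..<m}) (\<lambda>(k,l). H $$ (k,l) \<cdot>\<^sub>m (A l * V * madj (A k)))"
      using hill_sum_rep[OF A V] by simp
    finally show "L V = msum n n ({..<m} \<times> {..<m}) (\<lambda>(k,l). H $$ (k,l) \<cdot>\<^sub>m (A l * V * madj (A k)))" .
  qed
qed

lemma mblocks_carrier: "mblocks L n q \<subseteq> carrier_mat n q"
  unfolding mblocks_def using mblock_carrier by auto

lemma hill_span:
  assumes lin: "linear_map_on n q L" and hr: "hill_rep L n q m A H"
  shows "mblocks L n q \<subseteq> mspan n q (A ` {..<m})"
proof
  have A: "\<And>k. k < m \<Longrightarrow> A k \<in> carrier_mat n q" and H: "H \<in> carrier_mat m m"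
    using hr unfolding hill_rep_def by auto
  fix X assume "X \<in> mblocks L n q"
  then obtain i j where ij: "i < n" "j < q" "X = mblock L n q i j" unfolding mblocks_def by auto
  hence "X = Gm n q m A H i j" using hill_rep_iff[OF lin A H] hr by auto
  thus "X \<in> mspan n q (A ` {..<m})" unfolding Gm_def
    using A IF1[of "{..<m}" A n q "\<lambda>l. \<Sum>k<m. H $$ (k,l) * conjugate (A k $$ (i,j))"] by simp
qed

lemma choi_carrier: "choi L n q \<in> carrier_mat (q*n) (q*n)"
  unfolding choi_def by auto

lemma cols_choi: "set (cols (choi L n q)) = m2v n q ` mblocks L n q"
proof -
  have colc: "col (choi L n q) c = m2v n q (mblock L n q (c mod n) (c div n))" if c: "c < q*n" for c
  proof (rule eq_vecI)
    show "dim_vec (col (choi L n q) c) = dim_vec (m2v n q (mblock L n q (c mod n) (c div n)))"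
      by (simp add: choi_def m2v_def)
    fix r assume "r < dim_vec (m2v n q (mblock L n q (c mod n) (c div n)))"
    hence r: "r < q*n" by (simp add: m2v_def)
    have rb: "r mod n < n" "r div n < q" using r_bounds[OF r] by auto
    have cb: "c mod n < n" "c div n < q" using r_bounds[OF c] by auto
    show "col (choi L n q) c $ r = m2v n q (mblock L n q (c mod n) (c div n)) $ r"
      using r c rb cb by (simp add: choi_def m2v_def mblock_index)
  qed
  have "set (cols (choi L n q)) = col (choi L n q) ` {..<q*n}"
    unfolding cols_def by (auto simp: choi_def)
  also have "\<dots> = m2v n q ` mblocks L n q"
  proof
    show "col (choi L n q) ` {..<q*n} \<subseteq> m2v n q ` mblocks L n q"
    proof
      fix v assume "v \<in> col (choi L n q) ` {..<q*n}"
      then obtain c where c: "c < q*n" "v = col (choi L n q) c" by auto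
      have "mblock L n q (c mod n) (c div n) \<in> mblocks L n q"
        unfolding mblocks_def using r_bounds[OF c(1)] by auto
      thus "v \<in> m2v n q ` mblocks L n q" using colc[OF c(1)] c by auto
    qed
    show "m2v n q ` mblocks L n q \<subseteq> col (choi L n q) ` {..<q*n}"
    proof
      fix v assume "v \<in> m2v n q ` mblocks L n q"
      then obtain i j where ij: "i < n" "j < q" "v = m2v n q (mblock L n q i j)"
        unfolding mblocks_def by auto
      have c: "j*n + i < q*n" using lt_mult_add[OF ij(2) ij(1)] .
      have "v = col (choi L n q) (j*n+i)" using colc[OF c] ij by simp
      thus "v \<in> col (choi L n q) ` {..<q*n}" using c by auto
    qed
  qed
  finally show ?thesis .
qed

lemma min_rank:
  assumes lin: "linear_map_on n q L" and hr: "hill_rep L n q m' A' H'"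
  shows "vec_space.rank (q*n) (choi L n q) \<le> m'"
proof -
  have A: "A' ` {..<m'} \<subseteq> carrier_mat n q" using hr unfolding hill_rep_def by auto
  have "vec_space.rank (q*n) (choi L n q) \<le> card (A' ` {..<m'})"
    by (rule D1[OF mblocks_carrier choi_carrier cols_choi _ A hill_span[OF lin hr]]) simp
  also have "\<dots> \<le> m'" using card_image_le[of "{..<m'}" A'] by simp
  finally show ?thesis .
qed

lemma conj_one: "conjugate (1::'a::conjugatable_field) = 1"
proof -
  have "conjugate (1::'a) = conjugate 1 * conjugate (conjugate 1)" by simp
  also have "\<dots> = conjugate (1 * conjugate 1)" by (simp only: conjugate_dist_mul)
  also have "\<dots> = 1" by simp
  finally show ?thesis .
qed

lemma blk_star:
  assumes lin: "linear_map_on n q L" and star: "star_linear q L"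
    and ia: "i < n" "a < n" and jb: "j < q" "b < q"
  shows "mblock L n q i j $$ (a,b) = conjugate (mblock L n q a b $$ (i,j))"
proof -
  have madjE: "madj (munit q b j) = (munit q j b :: 'a mat)"
    by (intro eq_matI) (auto simp: madj_def munit_def conj_one)
  have C: "L (munit q b j) \<in> carrier_mat n n" using lin munit_carrier unfolding linear_map_on_def by auto
  have "L (madj (munit q b j)) = madj (L (munit q b j))"
    using star munit_carrier[of q b j] unfolding star_linear_def by blast
  hence "L (munit q j b) = madj (L (munit q b j))" unfolding madjE .
  hence "mblock L n q a b $$ (i,j) = conjugate (L (munit q b j) $$ (a,i))"
    using ia jb C by (simp add: mblock_index madj_index)
  thus ?thesis using ia jb by (simp add: mblock_index)
qed

lemma msum_diff_zero:
  fixes f :: "'b \<Rightarrow> 'a::field mat"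
  assumes f: "\<And>k. k \<in> I \<Longrightarrow> f k \<in> carrier_mat nn qq"
    and e: "msum nn qq I (\<lambda>k. c k \<cdot>\<^sub>m f k) = msum nn qq I (\<lambda>k. d k \<cdot>\<^sub>m f k)"
  shows "msum nn qq I (\<lambda>k. (c k - d k) \<cdot>\<^sub>m f k) = 0\<^sub>m nn qq"
proof (rule eq_matI)
  fix i j assume "i < dim_row (0\<^sub>m nn qq :: 'a mat)" "j < dim_col (0\<^sub>m nn qq :: 'a mat)"
  hence ij: "i < nn" "j < qq" by auto
  have "msum nn qq I (\<lambda>k. (c k - d k) \<cdot>\<^sub>m f k) $$ (i,j) = (\<Sum>k\<in>I. (c k - d k) * f k $$ (i,j))"
    using ij f by (intro msum_smult_index) auto
  also have "\<dots> = (\<Sum>k\<in>I. c k * f k $$ (i,j)) - (\<Sum>k\<in>I. d k * f k $$ (i,j))"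
    by (simp add: sum_subtractf left_diff_distrib)
  also have "\<dots> = msum nn qq I (\<lambda>k. c k \<cdot>\<^sub>m f k) $$ (i,j) - msum nn qq I (\<lambda>k. d k \<cdot>\<^sub>m f k) $$ (i,j)"
    by (simp only: msum_smult_index[OF ij f])
  also have "\<dots> = (0::'a::field)" using e by simp
  finally show "msum nn qq I (\<lambda>k. (c k - d k) \<cdot>\<^sub>m f k) $$ (i,j) = 0\<^sub>m nn qq $$ (i,j)" using ij by simp
qed auto

lemma sum_split_mult: "(\<Sum>t<(m::nat)*n. g t) = (\<Sum>l<m. \<Sum>s<n. g (l*n+s))"
proof -
  have inj: "inj_on (\<lambda>p. fst p * n + snd p) ({..<m} \<times> {..<n})"
  proof (rule inj_onI)
    fix x y assume xy: "x \<in> {..<m} \<times> {..<n}" "y \<in> {..<m} \<times> {..<n}"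
      "fst x * n + snd x = fst y * n + snd y"
    have "fst x = fst y" using divmod_simps[of "snd x" n "fst x"] divmod_simps[of "snd y" n "fst y"] xy by auto
    moreover have "snd x = snd y" using divmod_simps[of "snd x" n "fst x"] divmod_simps[of "snd y" n "fst y"] xy by auto
    ultimately show "x = y" by (simp add: prod_eq_iff)
  qed
  have img: "(\<lambda>p. fst p * n + snd p) ` ({..<m} \<times> {..<n}) = {..<m*n}"
  proof
    show "(\<lambda>p. fst p * n + snd p) ` ({..<m} \<times> {..<n}) \<subseteq> {..<m*n}"
    proof
      fix t assume "t \<in> (\<lambda>p. fst p * n + snd p) ` ({..<m} \<times> {..<n})"
      then obtain a b where "a < m" "b < n" "t = a * n + b" by auto
      thus "t \<in> {..<m*n}" using lt_mult_add[of a m b n] by simp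
    qed
    show "{..<m*n} \<subseteq> (\<lambda>p. fst p * n + snd p) ` ({..<m} \<times> {..<n})"
    proof
      fix t assume "t \<in> {..<m*n}"
      hence t: "t < m*n" by simp
      have "t = fst (t div n, t mod n) * n + snd (t div n, t mod n)" by simp
      moreover have "(t div n, t mod n) \<in> {..<m} \<times> {..<n}" using r_bounds[OF t] by auto
      ultimately show "t \<in> (\<lambda>p. fst p * n + snd p) ` ({..<m} \<times> {..<n})" by (rule image_eqI)
    qed
  qed
  have "(\<Sum>l<m. \<Sum>s<n. g (l*n+s)) = (\<Sum>p\<in>{..<m} \<times> {..<n}. g (fst p * n + snd p))"
    by (simp add: sum.cartesian_product split_beta)
  also have "\<dots> = (\<Sum>t\<in>(\<lambda>p. fst p * n + snd p) ` ({..<m} \<times> {..<n}). g t)"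
    by (rule sum.reindex[OF inj, unfolded comp_def, symmetric])
  finally show ?thesis unfolding img by simp
qed




lemma sum3_swap: "(\<Sum>i\<in>I. \<Sum>j\<in>J. \<Sum>l\<in>K. f i j l) = (\<Sum>l\<in>K. \<Sum>i\<in>I. \<Sum>j\<in>J. f i j l)"
proof -
  have "(\<Sum>i\<in>I. \<Sum>j\<in>J. \<Sum>l\<in>K. f i j l) = (\<Sum>i\<in>I. \<Sum>l\<in>K. \<Sum>j\<in>J. f i j l)"
    by (rule sum.cong[OF refl], rule sum.swap)
  also have "\<dots> = (\<Sum>l\<in>K. \<Sum>i\<in>I. \<Sum>j\<in>J. f i j l)" by (rule sum.swap)
  finally show ?thesis .
qed

lemma uniq_coeff:
  assumes BlC: "Bl \<subseteq> carrier_mat nn qq" and Mx: "Mx \<in> carrier_mat (qq*nn) nc"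
    and cols: "set (cols Mx) = m2v nn qq ` Bl"
    and r: "r = vec_space.rank (qq*nn) Mx"
    and f: "\<And>k. k < r \<Longrightarrow> f k \<in> carrier_mat nn qq"
    and sp: "Bl \<subseteq> mspan nn qq (f ` {..<r})"
    and e: "msum nn qq {..<r} (\<lambda>k. c k \<cdot>\<^sub>m f k) = msum nn qq {..<r} (\<lambda>k. d k \<cdot>\<^sub>m f k)"
    and k: "k < r"
  shows "c k = (d k :: 'a::field)"
proof -
  have "msum nn qq {..<r} (\<lambda>k. (c k - d k) \<cdot>\<^sub>m f k) = 0\<^sub>m nn qq"
    by (rule msum_diff_zero[OF _ e]) (use f in auto)
  from D2[OF BlC Mx cols r f sp this k] show ?thesis by simp
qed

lemma hill_matrix_index:
  assumes k: "k < m" and l: "l < m"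
  shows "hill_matrix n q m (\<lambda>k. mat n q (\<lambda>(i,j). beta k i j)) (\<lambda>k. mat n q (\<lambda>(i,j). conjugate (lam i j k))) $$ (k,l)
     = (\<Sum>i<n. \<Sum>j<q. beta k i j * (lam i j l :: 'a::conjugatable_field))"
  using k l by (simp add: hill_matrix_def scalar_prod_def hadamard_def mconj_def ones_vec_def conj_one
      atLeast0LessThan)


lemma beta_part:
  fixes L :: "'a::conjugatable_field mat \<Rightarrow> 'a mat"
  assumes lin: "linear_map_on n q L"
    and m_def: "m = vec_space.rank (q*n) (choi L n q)"
    and Ac: "\<And>k. k < m \<Longrightarrow> A k \<in> carrier_mat n q"
    and BlA: "mblocks L n q \<subseteq> mspan n q (A ` {..<m})"
    and lamrep: "\<forall>i<n. \<forall>j<q. mblock L n q i j = msum n q {..<m} (\<lambda>k. lam i j k \<cdot>\<^sub>m A k)"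
    and Lk_def: "Lk = (\<lambda>k. mat n q (\<lambda>(i,j). conjugate (lam i j k)))"
    and blkLk: "\<forall>i<n. \<forall>j<q. mblock L n q i j = msum n q {..<m} (\<lambda>k. conjugate (A k $$ (i,j)) \<cdot>\<^sub>m Lk k)"
    and beta: "\<forall>k<m. Lk k = msum n q ({..<n} \<times> {..<q}) (\<lambda>(i,j). beta k i j \<cdot>\<^sub>m mblock L n q i j)"
    and H_def: "H = hill_matrix n q m (\<lambda>k. mat n q (\<lambda>(i,j). beta k i j)) Lk"
  shows "hermitian_m H \<and> minimal_hill_rep L n q m A H \<and> vstack n q m Lk = kron H (1\<^sub>m n) * vstack n q m A"
proof -
  have BlC: "mblocks L n q \<subseteq> carrier_mat n q" by (rule mblocks_carrier)
  note Mx = choi_carrier[of L n q] and cols = cols_choi[of L n q]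
  have Hc: "H \<in> carrier_mat m m" unfolding H_def hill_matrix_def by auto
  have Hk: "H $$ (k,l) = (\<Sum>i<n. \<Sum>j<q. beta k i j * lam i j l)" if "k < m" "l < m" for k l
    unfolding H_def Lk_def by (rule hill_matrix_index[OF that])
  have LkC: "Lk k \<in> carrier_mat n q" for k unfolding Lk_def by auto
  have lamidx: "mblock L n q i j $$ (a,b) = (\<Sum>l<m. lam i j l * A l $$ (a,b))"
    if "i < n" "j < q" "a < n" "b < q" for i j a b
  proof -
    have "mblock L n q i j = msum n q {..<m} (\<lambda>k. lam i j k \<cdot>\<^sub>m A k)" using lamrep that by auto
    hence "mblock L n q i j $$ (a,b) = msum n q {..<m} (\<lambda>k. lam i j k \<cdot>\<^sub>m A k) $$ (a,b)" by simp
    also have "\<dots> = (\<Sum>l<m. lam i j l * A l $$ (a,b))"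
      using that Ac by (intro msum_smult_index) auto
    finally show ?thesis .
  qed
  have Lk_eq: "Lk k = msum n q {..<m} (\<lambda>l. H $$ (k,l) \<cdot>\<^sub>m A l)" if k: "k < m" for k
  proof (rule eq_matI)
    fix a b assume "a < dim_row (msum n q {..<m} (\<lambda>l. H $$ (k,l) \<cdot>\<^sub>m A l))"
      "b < dim_col (msum n q {..<m} (\<lambda>l. H $$ (k,l) \<cdot>\<^sub>m A l))"
    hence ab: "a < n" "b < q" by auto
    have "Lk k $$ (a,b) = msum n q ({..<n} \<times> {..<q}) (\<lambda>(i,j). beta k i j \<cdot>\<^sub>m mblock L n q i j) $$ (a,b)"
      using beta k by auto
    also have "\<dots> = (\<Sum>p\<in>{..<n} \<times> {..<q}. beta k (fst p) (snd p) * mblock L n q (fst p) (snd p) $$ (a,b))"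
      using ab by (simp add: split_beta mblock_carrier[THEN carrier_matD(1)] mblock_carrier[THEN carrier_matD(2)])
    also have "\<dots> = (\<Sum>i<n. \<Sum>j<q. beta k i j * mblock L n q i j $$ (a,b))"
      by (simp add: sum.cartesian_product split_beta)
    also have "\<dots> = (\<Sum>i<n. \<Sum>j<q. \<Sum>l<m. beta k i j * lam i j l * A l $$ (a,b))"
      using ab by (intro sum.cong refl) (simp add: lamidx sum_distrib_left mult.assoc)
    also have "\<dots> = (\<Sum>l<m. \<Sum>i<n. \<Sum>j<q. beta k i j * lam i j l * A l $$ (a,b))"
      by (rule sum3_swap)
    also have "\<dots> = (\<Sum>l<m. H $$ (k,l) * A l $$ (a,b))"
      using k by (intro sum.cong refl) (simp add: Hk sum_distrib_right)
    also have "\<dots> = msum n q {..<m} (\<lambda>l. H $$ (k,l) \<cdot>\<^sub>m A l) $$ (a,b)"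
      using ab Ac by (intro msum_smult_index[symmetric]) auto
    finally show "Lk k $$ (a,b) = msum n q {..<m} (\<lambda>l. H $$ (k,l) \<cdot>\<^sub>m A l) $$ (a,b)" .
  qed (use LkC in auto)
  have blkG: "mblock L n q i j = Gm n q m A H i j" if ij: "i < n" "j < q" for i j
  proof (rule eq_matI)
    fix a b assume "a < dim_row (Gm n q m A H i j)" "b < dim_col (Gm n q m A H i j)"
    hence ab: "a < n" "b < q" unfolding Gm_def by auto
    have "mblock L n q i j $$ (a,b) = msum n q {..<m} (\<lambda>k. conjugate (A k $$ (i,j)) \<cdot>\<^sub>m Lk k) $$ (a,b)"
      using blkLk ij by auto
    also have "\<dots> = (\<Sum>k<m. conjugate (A k $$ (i,j)) * Lk k $$ (a,b))"
      using ab LkC by (intro msum_smult_index) auto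
    also have "\<dots> = (\<Sum>k<m. conjugate (A k $$ (i,j)) * (\<Sum>l<m. H $$ (k,l) * A l $$ (a,b)))"
    proof (intro sum.cong refl)
      fix k assume k: "k \<in> {..<m}"
      have "Lk k $$ (a,b) = msum n q {..<m} (\<lambda>l. H $$ (k,l) \<cdot>\<^sub>m A l) $$ (a,b)" using Lk_eq k by auto
      also have "\<dots> = (\<Sum>l<m. H $$ (k,l) * A l $$ (a,b))" using ab Ac by (intro msum_smult_index) auto
      finally show "conjugate (A k $$ (i,j)) * Lk k $$ (a,b) = conjugate (A k $$ (i,j)) * (\<Sum>l<m. H $$ (k,l) * A l $$ (a,b))" by simp
    qed
    also have "\<dots> = (\<Sum>l<m. (\<Sum>k<m. H $$ (k,l) * conjugate (A k $$ (i,j))) * A l $$ (a,b))"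
      by (simp add: sum_distrib_left sum_distrib_right mult_ac) (rule sum.swap)
    also have "\<dots> = Gm n q m A H i j $$ (a,b)"
      unfolding Gm_def using ab Ac by (intro msum_smult_index[symmetric]) auto
    finally show "mblock L n q i j $$ (a,b) = Gm n q m A H i j $$ (a,b)" .
  qed (auto simp: mblock_def Gm_def)
  have hr: "hill_rep L n q m A H" using hill_rep_iff[OF lin Ac Hc] blkG by auto
  have minimal: "minimal_hill_rep L n q m A H"
    unfolding minimal_hill_rep_def using hr min_rank[OF lin] m_def by auto
  have lamG: "lam i j l = (\<Sum>k<m. H $$ (k,l) * conjugate (A k $$ (i,j)))"
    if "i < n" "j < q" "l < m" for i j l
  proof -
    have "msum n q {..<m} (\<lambda>k. lam i j k \<cdot>\<^sub>m A k) = msum n q {..<m} (\<lambda>l. (\<Sum>k<m. H $$ (k,l) * conjugate (A k $$ (i,j))) \<cdot>\<^sub>m A l)"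
      using lamrep blkG[of i j] that unfolding Gm_def by auto
    from uniq_coeff[OF BlC Mx cols m_def Ac BlA this that(3)] show ?thesis by simp
  qed
  have herm: "H $$ (t,l) = conjugate (H $$ (l,t))" if t: "t < m" and l: "l < m" for t l
  proof -
    have "msum n q {..<m} (\<lambda>l. H $$ (t,l) \<cdot>\<^sub>m A l) = msum n q {..<m} (\<lambda>l. conjugate (H $$ (l,t)) \<cdot>\<^sub>m A l)"
    proof (rule eq_matI)
      fix a b assume "a < dim_row (msum n q {..<m} (\<lambda>l. conjugate (H $$ (l,t)) \<cdot>\<^sub>m A l))"
        "b < dim_col (msum n q {..<m} (\<lambda>l. conjugate (H $$ (l,t)) \<cdot>\<^sub>m A l))"
      hence ab: "a < n" "b < q" by auto
      have "msum n q {..<m} (\<lambda>l. H $$ (t,l) \<cdot>\<^sub>m A l) $$ (a,b) = Lk t $$ (a,b)" using Lk_eq[OF t] by simp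
      also have "\<dots> = conjugate (lam a b t)" unfolding Lk_def using ab by simp
      also have "\<dots> = conjugate (\<Sum>k<m. H $$ (k,t) * conjugate (A k $$ (a,b)))" using lamG[OF ab t] by simp
      also have "\<dots> = (\<Sum>k<m. conjugate (H $$ (k,t)) * A k $$ (a,b))"
        by (simp add: sum_conjugate conjugate_dist_mul)
      also have "\<dots> = msum n q {..<m} (\<lambda>l. conjugate (H $$ (l,t)) \<cdot>\<^sub>m A l) $$ (a,b)"
        using ab Ac by (intro msum_smult_index[symmetric]) auto
      finally show "msum n q {..<m} (\<lambda>l. H $$ (t,l) \<cdot>\<^sub>m A l) $$ (a,b) = msum n q {..<m} (\<lambda>l. conjugate (H $$ (l,t)) \<cdot>\<^sub>m A l) $$ (a,b)" .
    qed auto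
    from uniq_coeff[OF BlC Mx cols m_def Ac BlA this l] show ?thesis by simp
  qed
  have hermitian: "hermitian_m H"
    unfolding hermitian_m_def
  proof (rule eq_matI)
    fix k l assume "k < dim_row H" "l < dim_col H"
    hence kl: "k < m" "l < m" using Hc by auto
    show "madj H $$ (k,l) = H $$ (k,l)" using kl Hc herm[OF kl] by (simp add: madj_index)
  qed (use Hc in auto)
  have vst: "vstack n q m Lk = kron H (1\<^sub>m n) * vstack n q m A"
  proof (rule eq_matI)
    have KC: "kron H (1\<^sub>m n) \<in> carrier_mat (m*n) (m*n)" using Hc unfolding kron_def by auto
    have VC: "vstack n q m A \<in> carrier_mat (m*n) q" unfolding vstack_def by auto
    fix r c assume "r < dim_row (kron H (1\<^sub>m n) * vstack n q m A)" "c < dim_col (kron H (1\<^sub>m n) * vstack n q m A)"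
    hence r: "r < m*n" and c: "c < q" using KC VC by auto
    have rb: "r mod n < n" "r div n < m" using r_bounds[of r m n] r by auto
    have "(kron H (1\<^sub>m n) * vstack n q m A) $$ (r,c) = (\<Sum>t<m*n. kron H (1\<^sub>m n) $$ (r,t) * vstack n q m A $$ (t,c))"
      by (rule mult_index[OF KC VC r c])
    also have "\<dots> = (\<Sum>l<m. \<Sum>s<n. kron H (1\<^sub>m n) $$ (r,l*n+s) * vstack n q m A $$ (l*n+s,c))"
      by (rule sum_split_mult)
    also have "\<dots> = (\<Sum>l<m. \<Sum>s<n. H $$ (r div n, l) * (if r mod n = s then 1 else 0) * A l $$ (s,c))"
    proof (intro sum.cong refl)
      fix l s assume ls: "l \<in> {..<m}" "s \<in> {..<n}"
      have t: "l*n+s < m*n" using lt_mult_add[of l m s n] ls by auto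
      have ds: "(l*n+s) div n = l" "(l*n+s) mod n = s" using divmod_simps[of s n l] ls by auto
      show "kron H (1\<^sub>m n) $$ (r,l*n+s) * vstack n q m A $$ (l*n+s,c) = H $$ (r div n, l) * (if r mod n = s then 1 else 0) * A l $$ (s,c)"
        using Hc r t c rb ls ds unfolding kron_def vstack_def by simp
    qed
    also have "\<dots> = (\<Sum>l<m. H $$ (r div n, l) * A l $$ (r mod n, c))"
      using rb by (intro sum.cong refl) (simp add: if_distrib[of "\<lambda>x. _ * x * _"] sum.delta cong: if_cong)
    also have "\<dots> = msum n q {..<m} (\<lambda>l. H $$ (r div n, l) \<cdot>\<^sub>m A l) $$ (r mod n, c)"
      using rb c Ac by (intro msum_smult_index[symmetric]) auto
    also have "\<dots> = Lk (r div n) $$ (r mod n, c)" using Lk_eq[OF rb(2)] by simp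
    also have "\<dots> = vstack n q m Lk $$ (r,c)" unfolding vstack_def using r c by simp
    finally show "vstack n q m Lk $$ (r,c) = (kron H (1\<^sub>m n) * vstack n q m A) $$ (r,c)" by simp
  qed (use Hc in \<open>auto simp: vstack_def kron_def\<close>)
  show ?thesis using hermitian minimal vst by auto
qed




lemma spaneq:
  fixes L :: "'a::conjugatable_field mat \<Rightarrow> 'a mat"
  assumes m_def: "m = vec_space.rank (q*n) (choi L n q)"
    and f: "\<And>k. k < m \<Longrightarrow> f k \<in> carrier_mat n q"
    and sp: "mblocks L n q \<subseteq> mspan n q (f ` {..<m})"
  shows "mspan n q (f ` {..<m}) = mspan n q (mblocks L n q)"
proof -
  have BlC: "mblocks L n q \<subseteq> carrier_mat n q" by (rule mblocks_carrier)
  note Mx = choi_carrier[of L n q] and cols = cols_choi[of L n q]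
  have TC: "f ` {..<m} \<subseteq> carrier_mat n q" using f by auto
  have "card (f ` {..<m}) \<le> m" using card_image_le[of "{..<m}" f] by simp
  hence "f ` {..<m} \<subseteq> mspan n q (mblocks L n q)"
    using D3[OF BlC Mx cols _ TC sp] m_def by simp
  hence "mspan n q (f ` {..<m}) \<subseteq> mspan n q (mblocks L n q)" by (rule mspan_trans[OF BlC])
  moreover have "mspan n q (mblocks L n q) \<subseteq> mspan n q (f ` {..<m})" by (rule mspan_trans[OF TC sp])
  ultimately show ?thesis by blast
qed

lemma part_b:
  fixes L :: "'a::conjugatable_field mat \<Rightarrow> 'a mat"
  assumes lin: "linear_map_on n q L"
    and m_def: "m = vec_space.rank (q*n) (choi L n q)"
    and mh: "minimal_hill_rep L n q m A H"
  shows "mspan n q (A ` {..<m}) = mspan n q (mblocks L n q)"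
proof -
  have hr: "hill_rep L n q m A H" using mh unfolding minimal_hill_rep_def by auto
  have A: "\<And>k. k < m \<Longrightarrow> A k \<in> carrier_mat n q" using hr unfolding hill_rep_def by auto
  show ?thesis by (rule spaneq[OF m_def A hill_span[OF lin hr]])
qed

lemma mblocks_img: "mblocks L n q = (\<lambda>p. mblock L n q (fst p) (snd p)) ` ({..<n} \<times> {..<q})"
proof
  show "mblocks L n q \<subseteq> (\<lambda>p. mblock L n q (fst p) (snd p)) ` ({..<n} \<times> {..<q})"
  proof
    fix X assume "X \<in> mblocks L n q"
    then obtain i j where ij: "i < n" "j < q" "X = mblock L n q i j" unfolding mblocks_def by auto
    show "X \<in> (\<lambda>p. mblock L n q (fst p) (snd p)) ` ({..<n} \<times> {..<q})"
      by (rule image_eqI[of _ _ "(i,j)"]) (use ij in auto)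
  qed
  show "(\<lambda>p. mblock L n q (fst p) (snd p)) ` ({..<n} \<times> {..<q}) \<subseteq> mblocks L n q"
  proof
    fix X assume "X \<in> (\<lambda>p. mblock L n q (fst p) (snd p)) ` ({..<n} \<times> {..<q})"
    then obtain a b where ab: "a < n" "b < q" "X = mblock L n q a b" by auto
    show "X \<in> mblocks L n q" unfolding mblocks_def
      by (intro CollectI exI[of _ a] exI[of _ b]) (use ab in simp)
  qed
qed

lemma part_a:
  fixes L :: "'a::conjugatable_field mat \<Rightarrow> 'a mat"
  assumes lin: "linear_map_on n q L"
    and star: "star_linear q L"
    and m_def: "m = vec_space.rank (q*n) (choi L n q)"
    and Ac0: "\<forall>k<m. A k \<in> carrier_mat n q"
    and sp: "mspan n q (A ` {..<m}) = mspan n q (mblocks L n q)"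
  shows "(\<exists>H. hermitian_m H \<and> minimal_hill_rep L n q m A H) \<and>
      (\<exists>lam. \<forall>i<n. \<forall>j<q. mblock L n q i j = msum n q {..<m} (\<lambda>k. lam i j k \<cdot>\<^sub>m A k)) \<and>
      (\<forall>lam lam'. (\<forall>i<n. \<forall>j<q. mblock L n q i j = msum n q {..<m} (\<lambda>k. lam i j k \<cdot>\<^sub>m A k)) \<longrightarrow>
                  (\<forall>i<n. \<forall>j<q. mblock L n q i j = msum n q {..<m} (\<lambda>k. lam' i j k \<cdot>\<^sub>m A k)) \<longrightarrow>
                  (\<forall>i<n. \<forall>j<q. \<forall>k<m. lam i j k = lam' i j k)) \<and>
      (\<forall>lam. (\<forall>i<n. \<forall>j<q. mblock L n q i j = msum n q {..<m} (\<lambda>k. lam i j k \<cdot>\<^sub>m A k)) \<longrightarrow>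
         (let Lk = (\<lambda>k. mat n q (\<lambda>(i,j). conjugate (lam i j k))) in
           mspan n q (Lk ` {..<m}) = mspan n q (mblocks L n q) \<and>
           (\<forall>i<n. \<forall>j<q. mblock L n q i j
                 = msum n q {..<m} (\<lambda>k. conjugate (A k $$ (i,j)) \<cdot>\<^sub>m Lk k)) \<and>
           (\<forall>alpha. (\<forall>i<n. \<forall>j<q. mblock L n q i j = msum n q {..<m} (\<lambda>k. alpha i j k \<cdot>\<^sub>m Lk k)) \<longrightarrow>
                (\<forall>i<n. \<forall>j<q. \<forall>k<m. alpha i j k = conjugate (A k $$ (i,j)))) \<and>
           (\<forall>beta. (\<forall>k<m. Lk k = msum n q ({..<n} \<times> {..<q})
                                     (\<lambda>(i,j). beta k i j \<cdot>\<^sub>m mblock L n q i j)) \<longrightarrow>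
                (let B = (\<lambda>k. mat n q (\<lambda>(i,j). beta k i j));
                     H = hill_matrix n q m B Lk in
                  hermitian_m H \<and> minimal_hill_rep L n q m A H \<and>
                  vstack n q m Lk = kron H (1\<^sub>m n) * vstack n q m A))))"
proof -
  have Ac: "\<And>k. k < m \<Longrightarrow> A k \<in> carrier_mat n q" using Ac0 by auto
  have BlC: "mblocks L n q \<subseteq> carrier_mat n q" by (rule mblocks_carrier)
  note Mx = choi_carrier[of L n q] and cols = cols_choi[of L n q]
  have BlA: "mblocks L n q \<subseteq> mspan n q (A ` {..<m})" using mspan_self[OF BlC] sp by simp
  have blkin: "mblock L n q i j \<in> mblocks L n q" if "i < n" "j < q" for i j
    unfolding mblocks_def using that by auto
  have exc: "\<exists>c. mblock L n q i j = msum n q {..<m} (\<lambda>k. c k \<cdot>\<^sub>m A k)" if "i < n" "j < q" for i j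
    using IF2[of "{..<m}" A n q "mblock L n q i j"] Ac BlA blkin[OF that] by auto
  have C2: "(\<exists>lam. \<forall>i<n. \<forall>j<q. mblock L n q i j = msum n q {..<m} (\<lambda>k. lam i j k \<cdot>\<^sub>m A k))"
  proof -
    define lam0 where "lam0 i j = (SOME c. mblock L n q i j = msum n q {..<m} (\<lambda>k. c k \<cdot>\<^sub>m A k))" for i j
    have "\<forall>i<n. \<forall>j<q. mblock L n q i j = msum n q {..<m} (\<lambda>k. lam0 i j k \<cdot>\<^sub>m A k)"
    proof (intro allI impI)
      fix i j assume ij: "i < n" "j < q"
      show "mblock L n q i j = msum n q {..<m} (\<lambda>k. lam0 i j k \<cdot>\<^sub>m A k)"
        unfolding lam0_def by (rule someI_ex[OF exc[OF ij]])
    qed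
    thus ?thesis by blast
  qed
  have C3: "(\<forall>lam lam'. (\<forall>i<n. \<forall>j<q. mblock L n q i j = msum n q {..<m} (\<lambda>k. lam i j k \<cdot>\<^sub>m A k)) \<longrightarrow>
                  (\<forall>i<n. \<forall>j<q. mblock L n q i j = msum n q {..<m} (\<lambda>k. lam' i j k \<cdot>\<^sub>m A k)) \<longrightarrow>
                  (\<forall>i<n. \<forall>j<q. \<forall>k<m. lam i j k = lam' i j k))"
  proof (intro allI impI)
    fix lam lam' i j k
    assume h1: "\<forall>i<n. \<forall>j<q. mblock L n q i j = msum n q {..<m} (\<lambda>k. lam i j k \<cdot>\<^sub>m A k)"
      and h2: "\<forall>i<n. \<forall>j<q. mblock L n q i j = msum n q {..<m} (\<lambda>k. lam' i j k \<cdot>\<^sub>m A k)"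
      and ijk: "i < n" "j < q" "k < m"
    have "msum n q {..<m} (\<lambda>k. lam i j k \<cdot>\<^sub>m A k) = msum n q {..<m} (\<lambda>k. lam' i j k \<cdot>\<^sub>m A k)"
      using h1 h2 ijk by auto
    from uniq_coeff[OF BlC Mx cols m_def Ac BlA this ijk(3)] show "lam i j k = lam' i j k" by simp
  qed
  have C4: "(\<forall>lam. (\<forall>i<n. \<forall>j<q. mblock L n q i j = msum n q {..<m} (\<lambda>k. lam i j k \<cdot>\<^sub>m A k)) \<longrightarrow>
         (let Lk = (\<lambda>k. mat n q (\<lambda>(i,j). conjugate (lam i j k))) in
           mspan n q (Lk ` {..<m}) = mspan n q (mblocks L n q) \<and>
           (\<forall>i<n. \<forall>j<q. mblock L n q i j
                 = msum n q {..<m} (\<lambda>k. conjugate (A k $$ (i,j)) \<cdot>\<^sub>m Lk k)) \<and>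
           (\<forall>alpha. (\<forall>i<n. \<forall>j<q. mblock L n q i j = msum n q {..<m} (\<lambda>k. alpha i j k \<cdot>\<^sub>m Lk k)) \<longrightarrow>
                (\<forall>i<n. \<forall>j<q. \<forall>k<m. alpha i j k = conjugate (A k $$ (i,j)))) \<and>
           (\<forall>beta. (\<forall>k<m. Lk k = msum n q ({..<n} \<times> {..<q})
                                     (\<lambda>(i,j). beta k i j \<cdot>\<^sub>m mblock L n q i j)) \<longrightarrow>
                (let B = (\<lambda>k. mat n q (\<lambda>(i,j). beta k i j));
                     H = hill_matrix n q m B Lk in
                  hermitian_m H \<and> minimal_hill_rep L n q m A H \<and>
                  vstack n q m Lk = kron H (1\<^sub>m n) * vstack n q m A))))"
  proof (intro allI impI)
    fix lam assume lamrep: "(\<forall>i<n. \<forall>j<q. mblock L n q i j = msum n q {..<m} (\<lambda>k. lam i j k \<cdot>\<^sub>m A k))"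
    define Lk where "Lk = (\<lambda>k. mat n q (\<lambda>(i,j). conjugate (lam i j k)))"
    have LkC: "\<And>k. Lk k \<in> carrier_mat n q" unfolding Lk_def by auto
    have blkLk: "\<forall>i<n. \<forall>j<q. mblock L n q i j = msum n q {..<m} (\<lambda>k. conjugate (A k $$ (i,j)) \<cdot>\<^sub>m Lk k)"
    proof (intro allI impI)
      fix i j assume ij: "i < n" "j < q"
      show "mblock L n q i j = msum n q {..<m} (\<lambda>k. conjugate (A k $$ (i,j)) \<cdot>\<^sub>m Lk k)"
      proof (rule eq_matI)
        fix a b assume "a < dim_row (msum n q {..<m} (\<lambda>k. conjugate (A k $$ (i,j)) \<cdot>\<^sub>m Lk k))"
          "b < dim_col (msum n q {..<m} (\<lambda>k. conjugate (A k $$ (i,j)) \<cdot>\<^sub>m Lk k))"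
        hence ab: "a < n" "b < q" by auto
        have "mblock L n q a b = msum n q {..<m} (\<lambda>k. lam a b k \<cdot>\<^sub>m A k)" using lamrep ab by auto
        hence "mblock L n q a b $$ (i,j) = msum n q {..<m} (\<lambda>k. lam a b k \<cdot>\<^sub>m A k) $$ (i,j)" by simp
        also have "\<dots> = (\<Sum>k<m. lam a b k * A k $$ (i,j))" using ij Ac by (intro msum_smult_index) auto
        finally have e: "mblock L n q a b $$ (i,j) = (\<Sum>k<m. lam a b k * A k $$ (i,j))" .
        have "msum n q {..<m} (\<lambda>k. conjugate (A k $$ (i,j)) \<cdot>\<^sub>m Lk k) $$ (a,b)
            = (\<Sum>k<m. conjugate (A k $$ (i,j)) * Lk k $$ (a,b))"
          using ab LkC by (intro msum_smult_index) auto
        also have "\<dots> = (\<Sum>k<m. conjugate (A k $$ (i,j)) * conjugate (lam a b k))"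
          unfolding Lk_def using ab by simp
        also have "\<dots> = conjugate (\<Sum>k<m. lam a b k * A k $$ (i,j))"
          by (simp add: sum_conjugate conjugate_dist_mul mult.commute)
        also have "\<dots> = conjugate (mblock L n q a b $$ (i,j))" using e by simp
        also have "\<dots> = mblock L n q i j $$ (a,b)" using blk_star[OF lin star ij(1) ab(1) ij(2) ab(2)] by simp
        finally show "mblock L n q i j $$ (a,b) = msum n q {..<m} (\<lambda>k. conjugate (A k $$ (i,j)) \<cdot>\<^sub>m Lk k) $$ (a,b)" by simp
      qed (auto simp: mblock_def)
    qed
    have BlLk: "mblocks L n q \<subseteq> mspan n q (Lk ` {..<m})"
    proof
      fix X assume "X \<in> mblocks L n q"
      then obtain i j where ij: "i < n" "j < q" "X = mblock L n q i j" unfolding mblocks_def by auto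
      thus "X \<in> mspan n q (Lk ` {..<m})"
        using blkLk IF1[of "{..<m}" Lk n q "\<lambda>k. conjugate (A k $$ (i,j))"] LkC by simp
    qed
    have R1: "mspan n q (Lk ` {..<m}) = mspan n q (mblocks L n q)"
      by (rule spaneq[OF m_def LkC BlLk])
    have R3: "\<forall>alpha. (\<forall>i<n. \<forall>j<q. mblock L n q i j = msum n q {..<m} (\<lambda>k. alpha i j k \<cdot>\<^sub>m Lk k)) \<longrightarrow>
                (\<forall>i<n. \<forall>j<q. \<forall>k<m. alpha i j k = conjugate (A k $$ (i,j)))"
    proof (intro allI impI)
      fix alpha i j k
      assume ha: "\<forall>i<n. \<forall>j<q. mblock L n q i j = msum n q {..<m} (\<lambda>k. alpha i j k \<cdot>\<^sub>m Lk k)"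
        and ijk: "i < n" "j < q" "k < m"
      have "msum n q {..<m} (\<lambda>k. alpha i j k \<cdot>\<^sub>m Lk k) = msum n q {..<m} (\<lambda>k. conjugate (A k $$ (i,j)) \<cdot>\<^sub>m Lk k)"
        using ha blkLk ijk by auto
      from uniq_coeff[OF BlC Mx cols m_def LkC BlLk this ijk(3)]
      show "alpha i j k = conjugate (A k $$ (i,j))" by simp
    qed
    have R4: "\<forall>beta. (\<forall>k<m. Lk k = msum n q ({..<n} \<times> {..<q})
                                     (\<lambda>(i,j). beta k i j \<cdot>\<^sub>m mblock L n q i j)) \<longrightarrow>
                (let B = (\<lambda>k. mat n q (\<lambda>(i,j). beta k i j));
                     H = hill_matrix n q m B Lk in
                  hermitian_m H \<and> minimal_hill_rep L n q m A H \<and>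
                  vstack n q m Lk = kron H (1\<^sub>m n) * vstack n q m A)"
    proof (intro allI impI)
      fix beta assume brep: "\<forall>k<m. Lk k = msum n q ({..<n} \<times> {..<q})
                                     (\<lambda>(i,j). beta k i j \<cdot>\<^sub>m mblock L n q i j)"
      show "let B = (\<lambda>k. mat n q (\<lambda>(i,j). beta k i j));
                     H = hill_matrix n q m B Lk in
                  hermitian_m H \<and> minimal_hill_rep L n q m A H \<and>
                  vstack n q m Lk = kron H (1\<^sub>m n) * vstack n q m A"
        unfolding Let_def by (rule beta_part[OF lin m_def Ac BlA lamrep Lk_def blkLk brep refl])
    qed
    have R: "mspan n q (Lk ` {..<m}) = mspan n q (mblocks L n q) \<and>
           (\<forall>i<n. \<forall>j<q. mblock L n q i j
                 = msum n q {..<m} (\<lambda>k. conjugate (A k $$ (i,j)) \<cdot>\<^sub>m Lk k)) \<and>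
           (\<forall>alpha. (\<forall>i<n. \<forall>j<q. mblock L n q i j = msum n q {..<m} (\<lambda>k. alpha i j k \<cdot>\<^sub>m Lk k)) \<longrightarrow>
                (\<forall>i<n. \<forall>j<q. \<forall>k<m. alpha i j k = conjugate (A k $$ (i,j)))) \<and>
           (\<forall>beta. (\<forall>k<m. Lk k = msum n q ({..<n} \<times> {..<q})
                                     (\<lambda>(i,j). beta k i j \<cdot>\<^sub>m mblock L n q i j)) \<longrightarrow>
                (let B = (\<lambda>k. mat n q (\<lambda>(i,j). beta k i j));
                     H = hill_matrix n q m B Lk in
                  hermitian_m H \<and> minimal_hill_rep L n q m A H \<and>
                  vstack n q m Lk = kron H (1\<^sub>m n) * vstack n q m A))"
      using R1 blkLk R3 R4 by (intro conjI)
    thus "let Lk = (\<lambda>k. mat n q (\<lambda>(i,j). conjugate (lam i j k))) in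
           mspan n q (Lk ` {..<m}) = mspan n q (mblocks L n q) \<and>
           (\<forall>i<n. \<forall>j<q. mblock L n q i j
                 = msum n q {..<m} (\<lambda>k. conjugate (A k $$ (i,j)) \<cdot>\<^sub>m Lk k)) \<and>
           (\<forall>alpha. (\<forall>i<n. \<forall>j<q. mblock L n q i j = msum n q {..<m} (\<lambda>k. alpha i j k \<cdot>\<^sub>m Lk k)) \<longrightarrow>
                (\<forall>i<n. \<forall>j<q. \<forall>k<m. alpha i j k = conjugate (A k $$ (i,j)))) \<and>
           (\<forall>beta. (\<forall>k<m. Lk k = msum n q ({..<n} \<times> {..<q})
                                     (\<lambda>(i,j). beta k i j \<cdot>\<^sub>m mblock L n q i j)) \<longrightarrow>
                (let B = (\<lambda>k. mat n q (\<lambda>(i,j). beta k i j));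
                     H = hill_matrix n q m B Lk in
                  hermitian_m H \<and> minimal_hill_rep L n q m A H \<and>
                  vstack n q m Lk = kron H (1\<^sub>m n) * vstack n q m A))"
      unfolding Lk_def Let_def .
  qed
  have C1: "(\<exists>H. hermitian_m H \<and> minimal_hill_rep L n q m A H)"
  proof -
    from C2 obtain lam where lamrep: "(\<forall>i<n. \<forall>j<q. mblock L n q i j = msum n q {..<m} (\<lambda>k. lam i j k \<cdot>\<^sub>m A k))" by blast
    define Lk where "Lk = (\<lambda>k. mat n q (\<lambda>(i,j). conjugate (lam i j k)))"
    have LkC: "\<And>k. Lk k \<in> carrier_mat n q" unfolding Lk_def by auto
    note X = mp[OF spec[OF C4, of lam] lamrep]
    have XR: "mspan n q (Lk ` {..<m}) = mspan n q (mblocks L n q) \<and>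
           (\<forall>i<n. \<forall>j<q. mblock L n q i j
                 = msum n q {..<m} (\<lambda>k. conjugate (A k $$ (i,j)) \<cdot>\<^sub>m Lk k)) \<and>
           (\<forall>alpha. (\<forall>i<n. \<forall>j<q. mblock L n q i j = msum n q {..<m} (\<lambda>k. alpha i j k \<cdot>\<^sub>m Lk k)) \<longrightarrow>
                (\<forall>i<n. \<forall>j<q. \<forall>k<m. alpha i j k = conjugate (A k $$ (i,j)))) \<and>
           (\<forall>beta. (\<forall>k<m. Lk k = msum n q ({..<n} \<times> {..<q})
                                     (\<lambda>(i,j). beta k i j \<cdot>\<^sub>m mblock L n q i j)) \<longrightarrow>
                (let B = (\<lambda>k. mat n q (\<lambda>(i,j). beta k i j));
                     H = hill_matrix n q m B Lk in
                  hermitian_m H \<and> minimal_hill_rep L n q m A H \<and>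
                  vstack n q m Lk = kron H (1\<^sub>m n) * vstack n q m A))"
      using X unfolding Lk_def Let_def .
    have sub: "Lk ` {..<m} \<subseteq> mspan n q (mblocks L n q)"
    proof -
      have "mspan n q (Lk ` {..<m}) = mspan n q (mblocks L n q)"
        using XR by (rule conjunct1)
      thus ?thesis using mspan_self[of "Lk ` {..<m}" n q] LkC by auto
    qed
    have exb: "\<exists>c. Lk k = msum n q ({..<n} \<times> {..<q}) (\<lambda>p. c p \<cdot>\<^sub>m mblock L n q (fst p) (snd p))"
      if k: "k < m" for k
    proof -
      have "Lk k \<in> mspan n q ((\<lambda>p. mblock L n q (fst p) (snd p)) ` ({..<n} \<times> {..<q}))"
        using sub k unfolding mblocks_img by auto
      from IF2[OF _ mblock_carrier this] show ?thesis by simp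
    qed
    define beta where "beta k i j = (SOME c. Lk k = msum n q ({..<n} \<times> {..<q}) (\<lambda>p. c p \<cdot>\<^sub>m mblock L n q (fst p) (snd p))) (i,j)" for k i j
    have brep: "\<forall>k<m. Lk k = msum n q ({..<n} \<times> {..<q}) (\<lambda>(i,j). beta k i j \<cdot>\<^sub>m mblock L n q i j)"
    proof (intro allI impI)
      fix k assume k: "k < m"
      have fe: "(\<lambda>(i,j). beta k i j \<cdot>\<^sub>m mblock L n q i j) = (\<lambda>p. (SOME c. Lk k = msum n q ({..<n} \<times> {..<q}) (\<lambda>p. c p \<cdot>\<^sub>m mblock L n q (fst p) (snd p))) p \<cdot>\<^sub>m mblock L n q (fst p) (snd p))"
        by (rule ext) (simp add: beta_def split_beta)
      show "Lk k = msum n q ({..<n} \<times> {..<q}) (\<lambda>(i,j). beta k i j \<cdot>\<^sub>m mblock L n q i j)"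
        unfolding fe by (rule someI_ex[OF exb[OF k]])
    qed
    have R4: "\<forall>beta. (\<forall>k<m. Lk k = msum n q ({..<n} \<times> {..<q})
                                     (\<lambda>(i,j). beta k i j \<cdot>\<^sub>m mblock L n q i j)) \<longrightarrow>
                (let B = (\<lambda>k. mat n q (\<lambda>(i,j). beta k i j));
                     H = hill_matrix n q m B Lk in
                  hermitian_m H \<and> minimal_hill_rep L n q m A H \<and>
                  vstack n q m Lk = kron H (1\<^sub>m n) * vstack n q m A)"
      using XR by (elim conjE)
    have "(let B = (\<lambda>k. mat n q (\<lambda>(i,j). beta k i j));
                     H = hill_matrix n q m B Lk in
                  hermitian_m H \<and> minimal_hill_rep L n q m A H \<and>
                  vstack n q m Lk = kron H (1\<^sub>m n) * vstack n q m A)"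
      by (rule mp[OF spec[OF R4, of beta] brep])
    hence "hermitian_m (hill_matrix n q m (\<lambda>k. mat n q (\<lambda>(i,j). beta k i j)) Lk) \<and>
      minimal_hill_rep L n q m A (hill_matrix n q m (\<lambda>k. mat n q (\<lambda>(i,j). beta k i j)) Lk)"
      unfolding Let_def by (elim conjE) (intro conjI)
    thus ?thesis by (intro exI)
  qed
  show ?thesis using C1 C2 C3 C4 by (intro conjI)
qed



theorem theorem5p8:
  fixes L :: "'a::conjugatable_field mat \<Rightarrow> 'a mat" and n q m :: nat
  assumes lin: "linear_map_on n q L"
    and star: "star_linear q L"
    and m_def: "m = vec_space.rank (q*n) (choi L n q)"
  shows
   "(\<forall>A. (\<forall>k<m. A k \<in> carrier_mat n q) \<and> mspan n q (A ` {..<m}) = mspan n q (mblocks L n q) \<longrightarrow>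
      (\<exists>H. hermitian_m H \<and> minimal_hill_rep L n q m A H) \<and>
      (\<exists>lam. \<forall>i<n. \<forall>j<q. mblock L n q i j = msum n q {..<m} (\<lambda>k. lam i j k \<cdot>\<^sub>m A k)) \<and>
      (\<forall>lam lam'. (\<forall>i<n. \<forall>j<q. mblock L n q i j = msum n q {..<m} (\<lambda>k. lam i j k \<cdot>\<^sub>m A k)) \<longrightarrow>
                  (\<forall>i<n. \<forall>j<q. mblock L n q i j = msum n q {..<m} (\<lambda>k. lam' i j k \<cdot>\<^sub>m A k)) \<longrightarrow>
                  (\<forall>i<n. \<forall>j<q. \<forall>k<m. lam i j k = lam' i j k)) \<and>
      (\<forall>lam. (\<forall>i<n. \<forall>j<q. mblock L n q i j = msum n q {..<m} (\<lambda>k. lam i j k \<cdot>\<^sub>m A k)) \<longrightarrow>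
         (let Lk = (\<lambda>k. mat n q (\<lambda>(i,j). conjugate (lam i j k))) in
           mspan n q (Lk ` {..<m}) = mspan n q (mblocks L n q) \<and>
           (\<forall>i<n. \<forall>j<q. mblock L n q i j
                 = msum n q {..<m} (\<lambda>k. conjugate (A k $$ (i,j)) \<cdot>\<^sub>m Lk k)) \<and>
           (\<forall>alpha. (\<forall>i<n. \<forall>j<q. mblock L n q i j = msum n q {..<m} (\<lambda>k. alpha i j k \<cdot>\<^sub>m Lk k)) \<longrightarrow>
                (\<forall>i<n. \<forall>j<q. \<forall>k<m. alpha i j k = conjugate (A k $$ (i,j)))) \<and>
           (\<forall>beta. (\<forall>k<m. Lk k = msum n q ({..<n} \<times> {..<q})
                                     (\<lambda>(i,j). beta k i j \<cdot>\<^sub>m mblock L n q i j)) \<longrightarrow>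
                (let B = (\<lambda>k. mat n q (\<lambda>(i,j). beta k i j));
                     H = hill_matrix n q m B Lk in
                  hermitian_m H \<and> minimal_hill_rep L n q m A H \<and>
                  vstack n q m Lk = kron H (1\<^sub>m n) * vstack n q m A)))))
    \<and>
    (\<forall>A H. minimal_hill_rep L n q m A H \<longrightarrow> mspan n q (A ` {..<m}) = mspan n q (mblocks L n q))"
  apply (rule conjI)
   apply (intro allI impI)
   apply (erule conjE)
   apply (rule part_a[OF lin star m_def]; assumption)
  apply (intro allI impI)
  apply (rule part_b[OF lin m_def]; assumption)
  done

end
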